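(* Let $\mathcal{I}$ be any one of $\mathcal{P}$, $\mathcal{P}_\infty$, $\mathcal{B}$. The class $\{\mu\in\mathcal{I}: B_{X_\mu}$ is dentable$\}$ is $F_{\sigma\delta}$ in $\mathcal{I}$.
   Context: Coding: $V$ is the set of finitely supported rational sequences; $\mathcal{P}\subset\mathbb{R}^V$ the seminorms on $V$ with pointwise convergence topology; for $\mu\in\mathcal{P}$, $\bar\mu$ is its seminorm extension to $c_{00}$ and $X_\mu$ the completion of $c_{00}/\{\bar\mu=0\}$; $\mathcal{P}_\infty=\{\mu:\dim X_\mu=\infty\}$, $\mathcal{B}=\{\mu\in\mathcal{P}_\infty:\bar\mu$ a norm on $c_{00}\}$, subspace topologies. The unit ball $B_X$ is dentable if it has slices $\{x\in B_X:f(x)>1-\alpha\}$ ($f\in S_{X^*}$, $\alpha>0$) of arbitrarily small diameter. *)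

theory Defs
  imports "HOL-Analysis.Analysis"
begin

typedef V = "{x :: nat \<Rightarrow> rat. finite {n. x n \<noteq> 0}}"
  by (rule exI[of _ "\<lambda>_. 0"]) auto

definition vplus :: "V \<Rightarrow> V \<Rightarrow> V" where
  "vplus a b = Abs_V (\<lambda>n. Rep_V a n + Rep_V b n)"

definition vscale :: "rat \<Rightarrow> V \<Rightarrow> V" where
  "vscale q a = Abs_V (\<lambda>n. q * Rep_V a n)"

definition is_seminorm_V :: "(V \<Rightarrow> real) \<Rightarrow> bool" where
  "is_seminorm_V \<mu> \<longleftrightarrow>
     (\<forall>a. 0 \<le> \<mu> a) \<and>
     (\<forall>a b. \<mu> (vplus a b) \<le> \<mu> a + \<mu> b) \<and>
     (\<forall>q a. \<mu> (vscale q a) = \<bar>real_of_rat q\<bar> * \<mu> a)"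

text \<open>The space P of seminorms on V, a subset of the function space V => real
  (whose topology is the product topology = pointwise convergence).\<close>
definition Pset :: "(V \<Rightarrow> real) set" where
  "Pset = {\<mu>. is_seminorm_V \<mu>}"

definition c00 :: "(nat \<Rightarrow> real) set" where
  "c00 = {x. finite {n. x n \<noteq> 0}}"

definition emb :: "V \<Rightarrow> (nat \<Rightarrow> real)" where
  "emb a = (\<lambda>n. real_of_rat (Rep_V a n))"

definition is_seminorm_c00 :: "((nat \<Rightarrow> real) \<Rightarrow> real) \<Rightarrow> bool" where
  "is_seminorm_c00 p \<longleftrightarrow>
     (\<forall>x\<in>c00. 0 \<le> p x) \<and>
     (\<forall>x\<in>c00. \<forall>y\<in>c00. p (\<lambda>n. x n + y n) \<le> p x + p y) \<and>
     (\<forall>c. \<forall>x\<in>c00. p (\<lambda>n. c * x n) = \<bar>c\<bar> * p x)"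

text \<open>The (unique) seminorm extension of \<mu> to c00.\<close>
definition mubar :: "(V \<Rightarrow> real) \<Rightarrow> (nat \<Rightarrow> real) \<Rightarrow> real" where
  "mubar \<mu> x = (THE r. \<exists>p. is_seminorm_c00 p \<and> (\<forall>a. p (emb a) = \<mu> a) \<and> p x = r)"

text \<open>Elements of X_mu are represented by mubar-Cauchy sequences in c00;
  two representatives denote the same element iff their distance is 0.\<close>
definition Xspace :: "(V \<Rightarrow> real) \<Rightarrow> (nat \<Rightarrow> nat \<Rightarrow> real) set" where
  "Xspace \<mu> = {s. (\<forall>k. s k \<in> c00) \<and>
     (\<forall>\<epsilon>>0. \<exists>N. \<forall>m\<ge>N. \<forall>n\<ge>N. mubar \<mu> (\<lambda>i. s m i - s n i) < \<epsilon>)}"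

definition Xnorm :: "(V \<Rightarrow> real) \<Rightarrow> (nat \<Rightarrow> nat \<Rightarrow> real) \<Rightarrow> real" where
  "Xnorm \<mu> s = lim (\<lambda>k. mubar \<mu> (s k))"

definition Xdist :: "(V \<Rightarrow> real) \<Rightarrow> (nat \<Rightarrow> nat \<Rightarrow> real) \<Rightarrow> (nat \<Rightarrow> nat \<Rightarrow> real) \<Rightarrow> real" where
  "Xdist \<mu> s t = Xnorm \<mu> (\<lambda>k i. s k i - t k i)"

definition Xball :: "(V \<Rightarrow> real) \<Rightarrow> (nat \<Rightarrow> nat \<Rightarrow> real) set" where
  "Xball \<mu> = {s \<in> Xspace \<mu>. Xnorm \<mu> s \<le> 1}"

definition is_Xfunctional :: "(V \<Rightarrow> real) \<Rightarrow> ((nat \<Rightarrow> nat \<Rightarrow> real) \<Rightarrow> real) \<Rightarrow> bool" where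
  "is_Xfunctional \<mu> F \<longleftrightarrow>
     (\<forall>s\<in>Xspace \<mu>. \<forall>t\<in>Xspace \<mu>. F (\<lambda>k i. s k i + t k i) = F s + F t) \<and>
     (\<forall>c. \<forall>s\<in>Xspace \<mu>. F (\<lambda>k i. c * s k i) = c * F s) \<and>
     (\<exists>C. \<forall>s\<in>Xspace \<mu>. \<bar>F s\<bar> \<le> C * Xnorm \<mu> s)"

definition dualnorm :: "(V \<Rightarrow> real) \<Rightarrow> ((nat \<Rightarrow> nat \<Rightarrow> real) \<Rightarrow> real) \<Rightarrow> real" where
  "dualnorm \<mu> F = Sup {\<bar>F s\<bar> | s. s \<in> Xball \<mu>}"

definition slice :: "(V \<Rightarrow> real) \<Rightarrow> ((nat \<Rightarrow> nat \<Rightarrow> real) \<Rightarrow> real) \<Rightarrow> real \<Rightarrow> (nat \<Rightarrow> nat \<Rightarrow> real) set" where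
  "slice \<mu> F \<alpha> = {s \<in> Xball \<mu>. F s > 1 - \<alpha>}"

definition Xdiam :: "(V \<Rightarrow> real) \<Rightarrow> (nat \<Rightarrow> nat \<Rightarrow> real) set \<Rightarrow> real" where
  "Xdiam \<mu> S = Sup {Xdist \<mu> s t | s t. s \<in> S \<and> t \<in> S}"

definition ball_dentable :: "(V \<Rightarrow> real) \<Rightarrow> bool" where
  "ball_dentable \<mu> \<longleftrightarrow>
     (\<forall>\<epsilon>>0. \<exists>F \<alpha>. is_Xfunctional \<mu> F \<and> dualnorm \<mu> F = 1 \<and> \<alpha> > 0 \<and>
        Xdiam \<mu> (slice \<mu> F \<alpha>) < \<epsilon>)"

text \<open>dim X_mu = infinity: for every n there are n linearly independent
  elements of X_mu (equality in X_mu meaning distance 0).\<close>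
definition X_infdim :: "(V \<Rightarrow> real) \<Rightarrow> bool" where
  "X_infdim \<mu> \<longleftrightarrow>
     (\<forall>n. \<exists>s :: nat \<Rightarrow> nat \<Rightarrow> nat \<Rightarrow> real. (\<forall>j<n. s j \<in> Xspace \<mu>) \<and>
        (\<forall>c :: nat \<Rightarrow> real. Xnorm \<mu> (\<lambda>k i. \<Sum>j<n. c j * s j k i) = 0 \<longrightarrow> (\<forall>j<n. c j = 0)))"

definition Pinf :: "(V \<Rightarrow> real) set" where
  "Pinf = {\<mu> \<in> Pset. X_infdim \<mu>}"

definition Bset :: "(V \<Rightarrow> real) set" where
  "Bset = {\<mu> \<in> Pinf. \<forall>x\<in>c00. mubar \<mu> x = 0 \<longrightarrow> x = (\<lambda>_. 0)}"

definition Fsigma_delta_in :: "'a topology \<Rightarrow> 'a set \<Rightarrow> bool" where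
  "Fsigma_delta_in T S \<longleftrightarrow>
     (\<exists>C :: nat \<Rightarrow> nat \<Rightarrow> 'a set. (\<forall>i j. closedin T (C i j)) \<and>
        S = (\<Inter>i. \<Union>j. C i j))"

end

theory Submission
  imports Defs
begin

definition E :: "nat \<Rightarrow> V" where "E n = Abs_V (\<lambda>i. if i = n then 1 else 0)"
definition vminus :: "V \<Rightarrow> V \<Rightarrow> V" where "vminus a b = vplus a (vscale (-1) b)"
definition gsum :: "(V \<Rightarrow> real) \<Rightarrow> (nat \<Rightarrow> real) \<Rightarrow> V \<Rightarrow> real" where
  "gsum \<mu> t a = (\<Sum>n\<in>{n. Rep_V a n \<noteq> 0}. real_of_rat (Rep_V a n) * t n * \<mu> (E n))"

definition cnd :: "real \<Rightarrow> real \<Rightarrow> V \<Rightarrow> (V \<Rightarrow> real) \<Rightarrow> (nat \<Rightarrow> real) \<Rightarrow> bool" where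
  "cnd \<epsilon> \<alpha> a0 \<mu> t \<longleftrightarrow> (\<forall>n. t n \<in> {-1..1}) \<and> (\<forall>a. \<bar>gsum \<mu> t a\<bar> \<le> \<mu> a) \<and> \<mu> a0 \<le> 1 \<and>
     1 - \<alpha>/4 \<le> gsum \<mu> t a0 \<and>
     (\<forall>a b. 1 \<le> \<mu> a \<or> 1 \<le> \<mu> b \<or> gsum \<mu> t a \<le> 1 - \<alpha> \<or> gsum \<mu> t b \<le> 1 - \<alpha> \<or> \<mu> (vminus a b) \<le> \<epsilon>)"

lemma finite_supp: "finite {n. Rep_V a n \<noteq> 0}"
  using Rep_V by auto

lemma cont_eval: "continuous_map (top_of_set I) euclideanreal (\<lambda>\<mu>::V\<Rightarrow>real. \<mu> a)"
  by (metis UNIV_I continuous_map_from_subtopology continuous_map_product_projection euclidean_product_topology)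

lemma closed_proj:
  fixes I :: "(V \<Rightarrow> real) set"
  shows "closedin (top_of_set I) {\<mu> \<in> I. \<exists>t. cnd \<epsilon> \<alpha> a0 \<mu> t}"
proof -
  define Y where "Y = product_topology (\<lambda>_::nat. top_of_set {-1..1::real}) UNIV"
  define X where "X = prod_topology (top_of_set I) Y"
  have tY: "topspace Y = {t. \<forall>n. t n \<in> {-1..1}}" by (auto simp: Y_def)
  have tX: "topspace X = I \<times> {t. \<forall>n. t n \<in> {-1..1}}" by (simp add: X_def tY)
  have cY: "compact_space Y" unfolding Y_def
    by (metis compact_Icc compact_space_product_topology compact_space_subtopology compactin_euclidean_iff)
  have c1: "continuous_map X euclideanreal (\<lambda>z. fst z a)" for a
    unfolding X_def using continuous_map_compose[OF continuous_map_fst cont_eval]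
    by (simp add: o_def)
  have c2: "continuous_map X euclideanreal (\<lambda>z. snd z n)" for n
  proof -
    have "continuous_map Y (top_of_set {-1..1}) (\<lambda>t. t n)" unfolding Y_def
      by (rule continuous_map_product_projection) simp
    then have "continuous_map Y euclideanreal (\<lambda>t. t n)"
      by (rule continuous_map_into_fulltopology)
    then show ?thesis unfolding X_def using continuous_map_compose[OF continuous_map_snd]
      by (simp add: o_def)
  qed
  have cg: "continuous_map X euclideanreal (\<lambda>z. gsum (fst z) (snd z) a)" for a
    unfolding gsum_def
    by (intro continuous_map_sum finite_supp continuous_map_real_mult c1 c2 continuous_map_canonical_const)
  have le: "closedin X {z \<in> topspace X. f z \<le> c}" if "continuous_map X euclideanreal f" for f c
    using closedin_continuous_map_preimage[OF that, of "{..c}"] by simp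
  have ge: "closedin X {z \<in> topspace X. c \<le> f z}" if "continuous_map X euclideanreal f" for f c
    using closedin_continuous_map_preimage[OF that, of "{c..}"] by simp
  have le2: "closedin X {z \<in> topspace X. f z \<le> g z}" if "continuous_map X euclideanreal f" "continuous_map X euclideanreal g" for f g
    using le[OF continuous_map_diff[OF that], of 0] by simp
  define Z where "Z = {z \<in> topspace X. cnd \<epsilon> \<alpha> a0 (fst z) (snd z)}"
  have Zeq: "Z = \<Inter>(range (\<lambda>a. {z \<in> topspace X. \<bar>gsum (fst z) (snd z) a\<bar> - fst z a \<le> 0}))
     \<inter> {z \<in> topspace X. fst z a0 \<le> 1} \<inter> {z \<in> topspace X. 1 - \<alpha>/4 \<le> gsum (fst z) (snd z) a0}
     \<inter> \<Inter>(range (\<lambda>(a,b). {z \<in> topspace X. 1 \<le> fst z a} \<union> {z \<in> topspace X. 1 \<le> fst z b}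
        \<union> {z \<in> topspace X. gsum (fst z) (snd z) a \<le> 1 - \<alpha>} \<union> {z \<in> topspace X. gsum (fst z) (snd z) b \<le> 1 - \<alpha>}
        \<union> {z \<in> topspace X. fst z (vminus a b) \<le> \<epsilon>}))"
    unfolding Z_def cnd_def tX by auto
  have A: "closedin X (\<Inter>(range (\<lambda>a. {z \<in> topspace X. \<bar>gsum (fst z) (snd z) a\<bar> - fst z a \<le> 0})))"
    by (rule closedin_Inter) (auto intro!: le2 continuous_map_real_abs cg c1)
  have B: "closedin X (\<Inter>(range (\<lambda>(a,b). {z \<in> topspace X. 1 \<le> fst z a} \<union> {z \<in> topspace X. 1 \<le> fst z b}
        \<union> {z \<in> topspace X. gsum (fst z) (snd z) a \<le> 1 - \<alpha>} \<union> {z \<in> topspace X. gsum (fst z) (snd z) b \<le> 1 - \<alpha>}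
        \<union> {z \<in> topspace X. fst z (vminus a b) \<le> \<epsilon>})))"
    by (rule closedin_Inter) (auto intro!: closedin_Un le ge cg c1)
  have "closedin X Z"
    unfolding Zeq by (intro closedin_Int A B le ge cg c1)
  then have "closedin (top_of_set I) (fst ` Z)"
    using closed_map_fst[OF cY] unfolding X_def closed_map_def by blast
  moreover have "fst ` Z = {\<mu> \<in> I. \<exists>t. cnd \<epsilon> \<alpha> a0 \<mu> t}"
  proof (intro equalityI subsetI)
    fix \<mu> assume "\<mu> \<in> {\<mu> \<in> I. \<exists>t. cnd \<epsilon> \<alpha> a0 \<mu> t}"
    then obtain t where "\<mu> \<in> I" "cnd \<epsilon> \<alpha> a0 \<mu> t" by auto
    then have "(\<mu>, t) \<in> Z" unfolding Z_def tX cnd_def by auto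
    then show "\<mu> \<in> fst ` Z" by force
  qed (auto simp: Z_def tX)
  ultimately show ?thesis by simp
qed

definition unitv :: "nat \<Rightarrow> nat \<Rightarrow> real" where "unitv m = (\<lambda>i. if i = m then 1 else 0)"
definition wt :: "(V \<Rightarrow> real) \<Rightarrow> (nat \<Rightarrow> real) \<Rightarrow> real" where
  "wt \<mu> x = (\<Sum>n\<in>{n. x n \<noteq> 0}. \<bar>x n\<bar> * \<mu> (E n))"

lemma c00_iff: "x \<in> c00 \<longleftrightarrow> finite {n. x n \<noteq> 0}" by (simp add: c00_def)

lemma c00_add[intro]: "x \<in> c00 \<Longrightarrow> y \<in> c00 \<Longrightarrow> (\<lambda>n. x n + y n) \<in> c00"
proof -
  assume "x \<in> c00" "y \<in> c00"
  then have "finite ({n. x n \<noteq> 0} \<union> {n. y n \<noteq> 0})" by (simp add: c00_def)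
  then show ?thesis unfolding c00_iff by (rule finite_subset[rotated]) auto
qed

lemma c00_diff[intro]: "x \<in> c00 \<Longrightarrow> y \<in> c00 \<Longrightarrow> (\<lambda>n. x n - y n) \<in> c00"
proof -
  assume "x \<in> c00" "y \<in> c00"
  then have "finite ({n. x n \<noteq> 0} \<union> {n. y n \<noteq> 0})" by (simp add: c00_def)
  then show ?thesis unfolding c00_iff by (rule finite_subset[rotated]) auto
qed

lemma c00_scale[intro]: "x \<in> c00 \<Longrightarrow> (\<lambda>n. c * x n) \<in> c00"
  unfolding c00_iff by (rule finite_subset[rotated]) auto

lemma c00_zero[intro]: "(\<lambda>n. 0) \<in> c00" by (simp add: c00_def)

lemma c00_unitv[intro]: "unitv m \<in> c00" unfolding c00_def unitv_def by simp

lemma c00_emb[intro]: "emb a \<in> c00"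
  unfolding c00_def emb_def using finite_supp[of a] by simp

lemma c00_sum[intro]: "finite S \<Longrightarrow> (\<And>j. j \<in> S \<Longrightarrow> u j \<in> c00) \<Longrightarrow> (\<lambda>n. \<Sum>j\<in>S. u j n) \<in> c00"
  by (induction S rule: finite_induct) (auto simp: c00_add)

lemma Rep_Abs_V: "finite {n. f n \<noteq> 0} \<Longrightarrow> Rep_V (Abs_V f) = f"
  by (simp add: Abs_V_inverse)

lemma Rep_vplus: "Rep_V (vplus a b) = (\<lambda>n. Rep_V a n + Rep_V b n)"
proof -
  have "finite ({n. Rep_V a n \<noteq> 0} \<union> {n. Rep_V b n \<noteq> 0})" using finite_supp by auto
  then have "finite {n. Rep_V a n + Rep_V b n \<noteq> 0}" by (rule finite_subset[rotated]) auto
  then show ?thesis unfolding vplus_def by (rule Rep_Abs_V)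
qed

lemma Rep_vscale: "Rep_V (vscale q a) = (\<lambda>n. q * Rep_V a n)"
proof -
  have "finite {n. q * Rep_V a n \<noteq> 0}" using finite_supp[of a] by (rule finite_subset[rotated]) auto
  then show ?thesis unfolding vscale_def by (rule Rep_Abs_V)
qed

lemma emb_vplus: "emb (vplus a b) = (\<lambda>n. emb a n + emb b n)"
  by (simp add: emb_def Rep_vplus of_rat_add)

lemma emb_vscale: "emb (vscale q a) = (\<lambda>n. real_of_rat q * emb a n)"
  by (simp add: emb_def Rep_vscale of_rat_mult)

lemma emb_vminus: "emb (vminus a b) = (\<lambda>n. emb a n - emb b n)"
  by (simp add: vminus_def emb_vplus emb_vscale of_rat_minus)

lemma Rep_E: "Rep_V (E m) = (\<lambda>i. if i = m then 1 else 0)"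
  unfolding E_def by (rule Rep_Abs_V) (rule finite_subset[of _ "{m}"], auto)

lemma emb_E: "emb (E m) = unitv m"
  by (simp add: emb_def Rep_E unitv_def fun_eq_iff)

lemma emb_supp: "{n. emb a n \<noteq> 0} = {n. Rep_V a n \<noteq> 0}"
  by (simp add: emb_def)

lemma emb_inj: "emb a = emb b \<Longrightarrow> a = b"
  by (metis Rep_V_inject emb_def fun_eq_iff of_rat_eq_iff)

lemma Pset_nonneg: "\<mu> \<in> Pset \<Longrightarrow> 0 \<le> \<mu> a"
  by (simp add: Pset_def is_seminorm_V_def)

lemma Pset_tri: "\<mu> \<in> Pset \<Longrightarrow> \<mu> (vplus a b) \<le> \<mu> a + \<mu> b"
  by (simp add: Pset_def is_seminorm_V_def)

lemma Pset_scale: "\<mu> \<in> Pset \<Longrightarrow> \<mu> (vscale q a) = \<bar>real_of_rat q\<bar> * \<mu> a"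
  by (simp add: Pset_def is_seminorm_V_def)

lemma Pset_le_minus: "\<mu> \<in> Pset \<Longrightarrow> \<mu> a \<le> \<mu> (vminus a b) + \<mu> b"
proof -
  assume P: "\<mu> \<in> Pset"
  have "vplus (vminus a b) b = a" by (rule emb_inj) (simp add: emb_vplus emb_vminus)
  then show ?thesis using Pset_tri[OF P, of "vminus a b" b] by simp
qed

lemma mu_le_sum:
  assumes P: "\<mu> \<in> Pset" and S: "finite S"
  shows "\<forall>a. {n. Rep_V a n \<noteq> 0} \<subseteq> S \<longrightarrow> \<mu> a \<le> (\<Sum>n\<in>S. \<bar>real_of_rat (Rep_V a n)\<bar> * \<mu> (E n))"
  using S
proof (induction S rule: finite_induct)
  case empty
  show ?case
  proof (intro allI impI)
    fix a :: V assume "{n. Rep_V a n \<noteq> 0} \<subseteq> {}"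
    then have "a = vscale 0 a" by (intro emb_inj) (auto simp: Rep_vscale emb_def fun_eq_iff)
    then have "\<mu> a = 0" using Pset_scale[OF P, of 0 a] by simp
    then show "\<mu> a \<le> (\<Sum>n\<in>{}. \<bar>real_of_rat (Rep_V a n)\<bar> * \<mu> (E n))" by simp
  qed
next
  case (insert m S)
  show ?case
  proof (intro allI impI)
    fix a :: V assume sub: "{n. Rep_V a n \<noteq> 0} \<subseteq> insert m S"
    define f where "f = (\<lambda>i. if i = m then 0 else Rep_V a i)"
    have ff: "finite {n. f n \<noteq> 0}" using finite_supp[of a] by (rule finite_subset[rotated]) (auto simp: f_def)
    define a' where "a' = Abs_V f"
    have Ra': "Rep_V a' = f" unfolding a'_def using ff by (rule Rep_Abs_V)
    have sub': "{n. Rep_V a' n \<noteq> 0} \<subseteq> S" using sub by (auto simp: Ra' f_def)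
    have IH: "\<mu> a' \<le> (\<Sum>n\<in>S. \<bar>real_of_rat (Rep_V a' n)\<bar> * \<mu> (E n))"
      using insert.IH sub' by blast
    have eqS: "(\<Sum>n\<in>S. \<bar>real_of_rat (Rep_V a' n)\<bar> * \<mu> (E n)) = (\<Sum>n\<in>S. \<bar>real_of_rat (Rep_V a n)\<bar> * \<mu> (E n))"
      using insert.hyps by (intro sum.cong) (auto simp: Ra' f_def)
    have dec: "a = vplus (vscale (Rep_V a m) (E m)) a'"
      by (subst Rep_V_inject[symmetric]) (auto simp: Rep_vplus Rep_vscale Rep_E Ra' f_def fun_eq_iff)
    have "\<mu> a \<le> \<mu> (vscale (Rep_V a m) (E m)) + \<mu> a'"
      using Pset_tri[OF P] dec by metis
    also have "\<dots> = \<bar>real_of_rat (Rep_V a m)\<bar> * \<mu> (E m) + \<mu> a'" by (simp add: Pset_scale[OF P])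
    also have "\<dots> \<le> \<bar>real_of_rat (Rep_V a m)\<bar> * \<mu> (E m) + (\<Sum>n\<in>S. \<bar>real_of_rat (Rep_V a n)\<bar> * \<mu> (E n))"
      using IH eqS by simp
    also have "\<dots> = (\<Sum>n\<in>insert m S. \<bar>real_of_rat (Rep_V a n)\<bar> * \<mu> (E n))"
      using insert.hyps by simp
    finally show "\<mu> a \<le> (\<Sum>n\<in>insert m S. \<bar>real_of_rat (Rep_V a n)\<bar> * \<mu> (E n))" .
  qed
qed

lemma wt_eq: "finite S \<Longrightarrow> {n. x n \<noteq> 0} \<subseteq> S \<Longrightarrow> wt \<mu> x = (\<Sum>n\<in>S. \<bar>x n\<bar> * \<mu> (E n))"
  unfolding wt_def by (rule sum.mono_neutral_left) auto

lemma mu_le_wt: "\<mu> \<in> Pset \<Longrightarrow> \<mu> a \<le> wt \<mu> (emb a)"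
  using mu_le_sum[of \<mu> "{n. Rep_V a n \<noteq> 0}"] finite_supp[of a]
  by (simp add: wt_def emb_supp) (simp add: emb_def)

lemma sn_nonneg: "is_seminorm_c00 p \<Longrightarrow> x \<in> c00 \<Longrightarrow> 0 \<le> p x"
  by (simp add: is_seminorm_c00_def)
lemma sn_add: "is_seminorm_c00 p \<Longrightarrow> x \<in> c00 \<Longrightarrow> y \<in> c00 \<Longrightarrow> p (\<lambda>n. x n + y n) \<le> p x + p y"
  by (simp add: is_seminorm_c00_def)
lemma sn_scale: "is_seminorm_c00 p \<Longrightarrow> x \<in> c00 \<Longrightarrow> p (\<lambda>n. c * x n) = \<bar>c\<bar> * p x"
  by (simp add: is_seminorm_c00_def)

lemma sn_zero: "is_seminorm_c00 p \<Longrightarrow> p (\<lambda>n. 0) = 0"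
  using sn_scale[of p "\<lambda>n. 0" 0] by auto

lemma sn_neg: "is_seminorm_c00 p \<Longrightarrow> x \<in> c00 \<Longrightarrow> p (\<lambda>n. - x n) = p x"
  using sn_scale[of p x "-1"] by simp

lemma sn_diff_sym: "is_seminorm_c00 p \<Longrightarrow> x \<in> c00 \<Longrightarrow> y \<in> c00 \<Longrightarrow> p (\<lambda>n. x n - y n) = p (\<lambda>n. y n - x n)"
  using sn_neg[of p "\<lambda>n. x n - y n"] by (simp add: c00_diff)

lemma sn_tri_diff: "is_seminorm_c00 p \<Longrightarrow> x \<in> c00 \<Longrightarrow> y \<in> c00 \<Longrightarrow> z \<in> c00 \<Longrightarrow>
   p (\<lambda>n. x n - z n) \<le> p (\<lambda>n. x n - y n) + p (\<lambda>n. y n - z n)"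
  using sn_add[of p "\<lambda>n. x n - y n" "\<lambda>n. y n - z n"] by (simp add: c00_diff)

lemma sn_tri_diff2: "is_seminorm_c00 p \<Longrightarrow> x \<in> c00 \<Longrightarrow> y \<in> c00 \<Longrightarrow> p x \<le> p (\<lambda>n. x n - y n) + p y"
  using sn_add[of p "\<lambda>n. x n - y n" y] by (simp add: c00_diff)

lemma sn_rev: "is_seminorm_c00 p \<Longrightarrow> x \<in> c00 \<Longrightarrow> y \<in> c00 \<Longrightarrow> \<bar>p x - p y\<bar> \<le> p (\<lambda>n. x n - y n)"
  using sn_tri_diff2[of p x y] sn_tri_diff2[of p y x] sn_diff_sym[of p x y] by linarith

lemma sn_le_sum:
  assumes p: "is_seminorm_c00 p" and S: "finite S"
  shows "\<forall>x. {n. x n \<noteq> 0} \<subseteq> S \<longrightarrow> p x \<le> (\<Sum>n\<in>S. \<bar>x n\<bar> * p (unitv n))"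
  using S
proof (induction S rule: finite_induct)
  case empty
  show ?case
  proof (intro allI impI)
    fix x :: "nat \<Rightarrow> real" assume "{n. x n \<noteq> 0} \<subseteq> {}"
    then have "x = (\<lambda>n. 0)" by auto
    then show "p x \<le> (\<Sum>n\<in>{}. \<bar>x n\<bar> * p (unitv n))" using sn_zero[OF p] by simp
  qed
next
  case (insert m S)
  show ?case
  proof (intro allI impI)
    fix x :: "nat \<Rightarrow> real" assume sub: "{n. x n \<noteq> 0} \<subseteq> insert m S"
    define x' where "x' = (\<lambda>i. if i = m then 0 else x i)"
    have sub': "{n. x' n \<noteq> 0} \<subseteq> S" using sub by (auto simp: x'_def)
    have x'c: "x' \<in> c00" unfolding c00_def using sub' insert.hyps by (auto intro: finite_subset)
    have IH: "p x' \<le> (\<Sum>n\<in>S. \<bar>x' n\<bar> * p (unitv n))" using insert.IH sub' by blast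
    have eqS: "(\<Sum>n\<in>S. \<bar>x' n\<bar> * p (unitv n)) = (\<Sum>n\<in>S. \<bar>x n\<bar> * p (unitv n))"
      using insert.hyps by (intro sum.cong) (auto simp: x'_def)
    have dec: "x = (\<lambda>n. (\<lambda>n. x m * unitv m n) n + x' n)"
      by (auto simp: unitv_def x'_def fun_eq_iff)
    have "p x \<le> p (\<lambda>n. x m * unitv m n) + p x'"
      using sn_add[OF p c00_scale[OF c00_unitv] x'c] dec by metis
    also have "\<dots> = \<bar>x m\<bar> * p (unitv m) + p x'" using sn_scale[OF p c00_unitv] by simp
    also have "\<dots> \<le> (\<Sum>n\<in>insert m S. \<bar>x n\<bar> * p (unitv n))"
      using IH eqS insert.hyps by simp
    finally show "p x \<le> (\<Sum>n\<in>insert m S. \<bar>x n\<bar> * p (unitv n))" .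
  qed
qed

lemma wt_seminorm: "\<mu> \<in> Pset \<Longrightarrow> is_seminorm_c00 (wt \<mu>)"
  unfolding is_seminorm_c00_def
proof (intro conjI ballI allI)
  assume P: "\<mu> \<in> Pset"
  have mE: "0 \<le> \<mu> (E n)" for n using Pset_nonneg[OF P] .
  show "0 \<le> wt \<mu> x" for x unfolding wt_def using mE by (intro sum_nonneg) simp
  show "wt \<mu> (\<lambda>n. x n + y n) \<le> wt \<mu> x + wt \<mu> y" if "x \<in> c00" "y \<in> c00" for x y
  proof -
    define S where "S = {n. x n \<noteq> 0} \<union> {n. y n \<noteq> 0}"
    have fS: "finite S" using that by (simp add: S_def c00_def)
    have "wt \<mu> (\<lambda>n. x n + y n) = (\<Sum>n\<in>S. \<bar>x n + y n\<bar> * \<mu> (E n))" by (rule wt_eq[OF fS]) (auto simp: S_def)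
    also have "\<dots> \<le> (\<Sum>n\<in>S. \<bar>x n\<bar> * \<mu> (E n) + \<bar>y n\<bar> * \<mu> (E n))"
      by (intro sum_mono) (metis abs_triangle_ineq distrib_right mE mult_right_mono)
    also have "\<dots> = wt \<mu> x + wt \<mu> y"
      by (simp add: sum.distrib wt_eq[OF fS, of x] wt_eq[OF fS, of y] S_def)
    finally show ?thesis .
  qed
  show "wt \<mu> (\<lambda>n. c * x n) = \<bar>c\<bar> * wt \<mu> x" if "x \<in> c00" for x c
  proof -
    define S where "S = {n. x n \<noteq> 0}"
    have fS: "finite S" using that by (simp add: S_def c00_def)
    have "wt \<mu> (\<lambda>n. c * x n) = (\<Sum>n\<in>S. \<bar>c * x n\<bar> * \<mu> (E n))" by (rule wt_eq[OF fS]) (auto simp: S_def)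
    also have "\<dots> = \<bar>c\<bar> * wt \<mu> x" by (simp add: wt_eq[OF fS, of x] S_def sum_distrib_left abs_mult mult.assoc)
    finally show ?thesis .
  qed
qed

lemma sn_le_wt:
  assumes p: "is_seminorm_c00 p" and pu: "\<And>n. p (unitv n) = \<mu> (E n)" and x: "x \<in> c00"
  shows "p x \<le> wt \<mu> x"
  using sn_le_sum[OF p, of "{n. x n \<noteq> 0}"] x by (simp add: c00_def wt_def pu)

lemma wt_nonneg: "\<mu> \<in> Pset \<Longrightarrow> x \<in> c00 \<Longrightarrow> 0 \<le> wt \<mu> x"
  using sn_nonneg[OF wt_seminorm] .

lemma approx_rat:
  assumes P: "\<mu> \<in> Pset" and x: "x \<in> c00" and d: "0 < \<delta>"
  shows "\<exists>a. wt \<mu> (\<lambda>n. x n - emb a n) < \<delta>"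
proof -
  define S where "S = {n. x n \<noteq> 0}"
  have fS: "finite S" using x by (simp add: S_def c00_def)
  define M where "M = (\<Sum>n\<in>S. \<mu> (E n)) + 1"
  have M0: "(\<Sum>n\<in>S. \<mu> (E n)) \<ge> 0" using Pset_nonneg[OF P] by (simp add: sum_nonneg)
  then have Mp: "M > 0" by (simp add: M_def)
  have dM: "\<delta>/M > 0" using d Mp by simp
  have "\<forall>n. \<exists>q. \<bar>x n - real_of_rat q\<bar> < \<delta>/M"
  proof
    fix n
    obtain r where r: "r \<in> \<rat>" "x n - \<delta>/M < r" "r < x n + \<delta>/M"
      using Rats_dense_in_real[of "x n - \<delta>/M" "x n + \<delta>/M"] dM by auto
    from r(1) obtain q where "r = real_of_rat q" by (rule Rats_cases)
    then show "\<exists>q. \<bar>x n - real_of_rat q\<bar> < \<delta>/M" using r by (intro exI[of _ q]) auto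
  qed
  then obtain q where q: "\<And>n. \<bar>x n - real_of_rat (q n)\<bar> < \<delta>/M" by metis
  define f where "f = (\<lambda>n. if n \<in> S then q n else 0)"
  have ff: "finite {n. f n \<noteq> 0}" using fS by (rule finite_subset[rotated]) (auto simp: f_def)
  define a where "a = Abs_V f"
  have ea: "emb a n = (if n \<in> S then real_of_rat (q n) else 0)" for n
    unfolding a_def emb_def using Rep_Abs_V[OF ff] by (simp add: f_def)
  have "wt \<mu> (\<lambda>n. x n - emb a n) = (\<Sum>n\<in>S. \<bar>x n - emb a n\<bar> * \<mu> (E n))"
    by (rule wt_eq[OF fS]) (auto simp: S_def ea)
  also have "\<dots> \<le> (\<Sum>n\<in>S. \<delta>/M * \<mu> (E n))"
    by (intro sum_mono mult_right_mono) (use q Pset_nonneg[OF P] in \<open>auto simp: ea less_imp_le\<close>)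
  also have "\<dots> = \<delta>/M * (M - 1)" by (simp add: sum_distrib_left M_def)
  also have "\<dots> < \<delta>" using dM Mp d by (simp add: field_simps)
  finally show ?thesis by blast
qed

definition ext :: "(V \<Rightarrow> real) \<Rightarrow> (nat \<Rightarrow> real) \<Rightarrow> real" where
  "ext \<mu> x = Inf {\<mu> a + wt \<mu> (\<lambda>n. x n - emb a n) | a. True}"

lemma ext_upper:
  assumes P: "\<mu> \<in> Pset" and x: "x \<in> c00"
  shows "ext \<mu> x \<le> \<mu> a + wt \<mu> (\<lambda>n. x n - emb a n)"
  unfolding ext_def
proof (rule cInf_lower)
  show "bdd_below {\<mu> a + wt \<mu> (\<lambda>n. x n - emb a n) |a. True}"
    by (rule bdd_belowI[of _ 0]) (auto intro!: add_nonneg_nonneg Pset_nonneg[OF P] wt_nonneg[OF P] c00_diff x)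
qed auto

lemma ext_lower:
  assumes P: "\<mu> \<in> Pset" and x: "x \<in> c00"
  shows "\<mu> a - wt \<mu> (\<lambda>n. x n - emb a n) \<le> ext \<mu> x"
  unfolding ext_def
proof (rule cInf_greatest)
  fix v assume "v \<in> {\<mu> a + wt \<mu> (\<lambda>n. x n - emb a n) |a. True}"
  then obtain b where v: "v = \<mu> b + wt \<mu> (\<lambda>n. x n - emb b n)" by auto
  have W: "is_seminorm_c00 (wt \<mu>)" by (rule wt_seminorm[OF P])
  have "\<mu> a \<le> \<mu> (vminus a b) + \<mu> b" by (rule Pset_le_minus[OF P])
  also have "\<mu> (vminus a b) \<le> wt \<mu> (\<lambda>n. emb a n - emb b n)"
    using mu_le_wt[OF P, of "vminus a b"] by (simp add: emb_vminus)
  also have "wt \<mu> (\<lambda>n. emb a n - emb b n) \<le> wt \<mu> (\<lambda>n. emb a n - x n) + wt \<mu> (\<lambda>n. x n - emb b n)"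
    by (rule sn_tri_diff[OF W]) (auto intro: x)
  also have "wt \<mu> (\<lambda>n. emb a n - x n) = wt \<mu> (\<lambda>n. x n - emb a n)"
    by (rule sn_diff_sym[OF W]) (auto intro: x)
  finally show "\<mu> a - wt \<mu> (\<lambda>n. x n - emb a n) \<le> v" using v by simp
qed auto

lemma ext_approx:
  assumes P: "\<mu> \<in> Pset" and x: "x \<in> c00"
  shows "\<bar>ext \<mu> x - \<mu> a\<bar> \<le> wt \<mu> (\<lambda>n. x n - emb a n)"
  using ext_upper[OF P x, of a] ext_lower[OF P x, of a] by linarith

lemma ext_emb: "\<mu> \<in> Pset \<Longrightarrow> ext \<mu> (emb b) = \<mu> b"
  using ext_approx[of \<mu> "emb b" b] sn_zero[OF wt_seminorm, of \<mu>] by auto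

lemma ext_nonneg:
  assumes P: "\<mu> \<in> Pset" and x: "x \<in> c00"
  shows "0 \<le> ext \<mu> x"
  unfolding ext_def
proof (rule cInf_greatest)
  fix v assume "v \<in> {\<mu> a + wt \<mu> (\<lambda>n. x n - emb a n) | a. True}"
  then obtain a where "v = \<mu> a + wt \<mu> (\<lambda>n. x n - emb a n)" by auto
  then show "0 \<le> v" using Pset_nonneg[OF P, of a] wt_nonneg[OF P c00_diff[OF x c00_emb[of a]]] by simp
qed auto

lemma ext_tri:
  assumes P: "\<mu> \<in> Pset" and x: "x \<in> c00" and y: "y \<in> c00"
  shows "ext \<mu> (\<lambda>n. x n + y n) \<le> ext \<mu> x + ext \<mu> y"
proof (rule field_le_epsilon)
  fix e :: real assume e: "0 < e"
  have W: "is_seminorm_c00 (wt \<mu>)" by (rule wt_seminorm[OF P])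
  obtain a where a: "wt \<mu> (\<lambda>n. x n - emb a n) < e/4" using approx_rat[OF P x, of "e/4"] e by auto
  obtain b where b: "wt \<mu> (\<lambda>n. y n - emb b n) < e/4" using approx_rat[OF P y, of "e/4"] e by auto
  have xy: "(\<lambda>n. x n + y n) \<in> c00" using x y by auto
  have "ext \<mu> (\<lambda>n. x n + y n) \<le> \<mu> (vplus a b) + wt \<mu> (\<lambda>n. (x n + y n) - emb (vplus a b) n)"
    by (rule ext_upper[OF P xy])
  also have "wt \<mu> (\<lambda>n. (x n + y n) - emb (vplus a b) n) = wt \<mu> (\<lambda>n. (\<lambda>n. x n - emb a n) n + (\<lambda>n. y n - emb b n) n)"
    by (simp add: emb_vplus algebra_simps)
  also have "\<dots> \<le> wt \<mu> (\<lambda>n. x n - emb a n) + wt \<mu> (\<lambda>n. y n - emb b n)"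
    by (rule sn_add[OF W]) (auto intro: x y)
  also have "\<mu> (vplus a b) \<le> \<mu> a + \<mu> b" by (rule Pset_tri[OF P])
  also have "\<mu> a \<le> ext \<mu> x + wt \<mu> (\<lambda>n. x n - emb a n)" using ext_lower[OF P x, of a] by simp
  also have "\<mu> b \<le> ext \<mu> y + wt \<mu> (\<lambda>n. y n - emb b n)" using ext_lower[OF P y, of b] by simp
  finally show "ext \<mu> (\<lambda>n. x n + y n) \<le> ext \<mu> x + ext \<mu> y + e" using a b by simp
qed

lemma ext_scale:
  assumes P: "\<mu> \<in> Pset" and x: "x \<in> c00"
  shows "ext \<mu> (\<lambda>n. c * x n) = \<bar>c\<bar> * ext \<mu> x"
proof -
  have W: "is_seminorm_c00 (wt \<mu>)" by (rule wt_seminorm[OF P])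
  define D where "D = wt \<mu> x + ext \<mu> x + 2 * (\<bar>c\<bar> + 1)"
  have D: "D > 0" unfolding D_def using wt_nonneg[OF P x] ext_nonneg[OF P x] by simp
  have key: "\<bar>ext \<mu> (\<lambda>n. c * x n) - \<bar>c\<bar> * ext \<mu> x\<bar> \<le> e" if e: "e > 0" for e
  proof -
    define \<delta> where "\<delta> = e / D"
    have d: "\<delta> > 0" using e D by (simp add: \<delta>_def)
    have "c - min \<delta> 1 < c + min \<delta> 1" using d by simp
    then obtain r where r: "r \<in> \<rat>" "c - min \<delta> 1 < r" "r < c + min \<delta> 1"
      using Rats_dense_in_real by blast
    from r(1) obtain q where rq: "r = real_of_rat q" by (rule Rats_cases)
    have cq: "\<bar>c - real_of_rat q\<bar> \<le> \<delta>" using r(2,3) unfolding rq by linarith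
    have q1: "\<bar>real_of_rat q\<bar> \<le> \<bar>c\<bar> + 1" using r(2,3) unfolding rq by linarith
    obtain a where a: "wt \<mu> (\<lambda>n. x n - emb a n) < \<delta>" using approx_rat[OF P x d] by auto
    have cx: "(\<lambda>n. c * x n) \<in> c00" using x by auto
    have "wt \<mu> (\<lambda>n. c * x n - emb (vscale q a) n)
        = wt \<mu> (\<lambda>n. (\<lambda>n. (c - real_of_rat q) * x n) n + (\<lambda>n. real_of_rat q * (x n - emb a n)) n)"
    proof -
      have "(\<lambda>n. c * x n - emb (vscale q a) n) = (\<lambda>n. (\<lambda>n. (c - real_of_rat q) * x n) n + (\<lambda>n. real_of_rat q * (x n - emb a n)) n)"
      proof
        fix n
        show "c * x n - emb (vscale q a) n = (\<lambda>n. (c - real_of_rat q) * x n) n + (\<lambda>n. real_of_rat q * (x n - emb a n)) n"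
          unfolding emb_vscale by (simp add: left_diff_distrib right_diff_distrib)
      qed
      then show ?thesis by simp
    qed
    also have "\<dots> \<le> wt \<mu> (\<lambda>n. (c - real_of_rat q) * x n) + wt \<mu> (\<lambda>n. real_of_rat q * (x n - emb a n))"
      by (rule sn_add[OF W c00_scale[OF x] c00_scale[OF c00_diff[OF x c00_emb]]])
    also have "\<dots> = \<bar>c - real_of_rat q\<bar> * wt \<mu> x + \<bar>real_of_rat q\<bar> * wt \<mu> (\<lambda>n. x n - emb a n)"
      using sn_scale[OF W x, of "c - real_of_rat q"] sn_scale[OF W c00_diff[OF x c00_emb], of "real_of_rat q" a]
      by simp
    finally have w1: "wt \<mu> (\<lambda>n. c * x n - emb (vscale q a) n) \<le> \<bar>c - real_of_rat q\<bar> * wt \<mu> x + \<bar>real_of_rat q\<bar> * wt \<mu> (\<lambda>n. x n - emb a n)" .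
    have t1: "\<bar>ext \<mu> (\<lambda>n. c * x n) - \<mu> (vscale q a)\<bar> \<le> wt \<mu> (\<lambda>n. c * x n - emb (vscale q a) n)"
      by (rule ext_approx[OF P cx])
    have sq: "\<mu> (vscale q a) = \<bar>real_of_rat q\<bar> * \<mu> a" by (rule Pset_scale[OF P])
    have t2: "\<bar>\<mu> a - ext \<mu> x\<bar> \<le> wt \<mu> (\<lambda>n. x n - emb a n)" using ext_approx[OF P x, of a] by linarith
    define Q where "Q = \<bar>real_of_rat q\<bar>"
    define m where "m = \<mu> a"
    define X where "X = ext \<mu> x"
    define W1 where "W1 = wt \<mu> (\<lambda>n. x n - emb a n)"
    define W0 where "W0 = wt \<mu> x"
    define Cq where "Cq = \<bar>c - real_of_rat q\<bar>"
    have X0: "X \<ge> 0" unfolding X_def by (rule ext_nonneg[OF P x])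
    have W00: "W0 \<ge> 0" unfolding W0_def by (rule wt_nonneg[OF P x])
    have W10: "W1 \<ge> 0" unfolding W1_def by (rule wt_nonneg[OF P c00_diff[OF x c00_emb]])
    have Q0: "Q \<ge> 0" by (simp add: Q_def)
    have t2': "\<bar>m - X\<bar> \<le> W1" using t2 by (simp add: m_def X_def W1_def)
    have e1: "Q*m - \<bar>c\<bar>*X = Q*(m - X) + (Q - \<bar>c\<bar>)*X" by (simp add: algebra_simps)
    have e2: "\<bar>Q*(m-X)\<bar> = Q*\<bar>m-X\<bar>" using Q0 by (simp add: abs_mult)
    have e3: "\<bar>(Q-\<bar>c\<bar>)*X\<bar> = \<bar>Q - \<bar>c\<bar>\<bar>*X" using X0 by (simp add: abs_mult)
    have e4: "\<bar>Q - \<bar>c\<bar>\<bar> \<le> Cq" unfolding Q_def Cq_def by linarith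
    have e5: "\<bar>Q - \<bar>c\<bar>\<bar>*X \<le> Cq * X" by (rule mult_right_mono[OF e4 X0])
    have e6: "Q*\<bar>m-X\<bar> \<le> Q*W1" by (rule mult_left_mono[OF t2' Q0])
    have e7: "\<bar>Q*(m-X) + (Q - \<bar>c\<bar>)*X\<bar> \<le> \<bar>Q*(m-X)\<bar> + \<bar>(Q - \<bar>c\<bar>)*X\<bar>" by (rule abs_triangle_ineq)
    have t3: "\<bar>\<mu> (vscale q a) - \<bar>c\<bar> * X\<bar> \<le> Q * W1 + Cq * X"
      using e1 e2 e3 e5 e6 e7 sq unfolding Q_def[symmetric] m_def[symmetric] by linarith
    have w1': "wt \<mu> (\<lambda>n. c * x n - emb (vscale q a) n) \<le> Cq * W0 + Q * W1"
      using w1 by (simp add: Cq_def W0_def Q_def W1_def)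
    have "\<bar>ext \<mu> (\<lambda>n. c * x n) - \<bar>c\<bar> * ext \<mu> x\<bar> \<le> Cq * W0 + Cq * X + 2 * (Q * W1)"
      using t1 w1' t3 unfolding X_def by linarith
    also have "\<dots> \<le> \<delta> * W0 + \<delta> * X + 2 * ((\<bar>c\<bar> + 1) * \<delta>)"
    proof -
      have "Cq * W0 \<le> \<delta> * W0" by (rule mult_right_mono[OF _ W00]) (use cq in \<open>simp add: Cq_def\<close>)
      moreover have "Cq * X \<le> \<delta> * X" by (rule mult_right_mono[OF _ X0]) (use cq in \<open>simp add: Cq_def\<close>)
      moreover have "Q * W1 \<le> (\<bar>c\<bar> + 1) * \<delta>"
        by (rule mult_mono) (use q1 a W10 in \<open>auto simp: Q_def W1_def\<close>)
      ultimately show ?thesis by linarith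
    qed
    also have "\<dots> = \<delta> * D"
      unfolding D_def W0_def X_def by (simp add: ring_distribs mult_ac)
    also have "\<dots> = e" using D by (simp add: \<delta>_def)
    finally show ?thesis .
  qed
  have "\<bar>ext \<mu> (\<lambda>n. c * x n) - \<bar>c\<bar> * ext \<mu> x\<bar> \<le> 0"
    by (rule field_le_epsilon) (use key in simp)
  then show ?thesis by simp
qed

lemma ext_seminorm:
  assumes P: "\<mu> \<in> Pset" shows "is_seminorm_c00 (ext \<mu>)"
  unfolding is_seminorm_c00_def
proof (intro conjI ballI allI)
  show "0 \<le> ext \<mu> x" if "x \<in> c00" for x using ext_nonneg[OF P that] .
  show "ext \<mu> (\<lambda>n. x n + y n) \<le> ext \<mu> x + ext \<mu> y" if "x \<in> c00" "y \<in> c00" for x y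
    using ext_tri[OF P that] .
  show "ext \<mu> (\<lambda>n. c * x n) = \<bar>c\<bar> * ext \<mu> x" if "x \<in> c00" for x c
    using ext_scale[OF P that] .
qed

lemma ext_unique:
  assumes P: "\<mu> \<in> Pset" and p: "is_seminorm_c00 p" and pe: "\<And>a. p (emb a) = \<mu> a" and x: "x \<in> c00"
  shows "p x = ext \<mu> x"
proof -
  have pu: "p (unitv n) = \<mu> (E n)" for n using pe[of "E n"] by (simp add: emb_E)
  have "\<bar>p x - ext \<mu> x\<bar> \<le> 0 + e" if e: "e > 0" for e
  proof -
    obtain a where a: "wt \<mu> (\<lambda>n. x n - emb a n) < e/2" using approx_rat[OF P x, of "e/2"] e by auto
    have "\<bar>p x - \<mu> a\<bar> \<le> p (\<lambda>n. x n - emb a n)" using sn_rev[OF p x c00_emb, of a] pe by simp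
    also have "\<dots> \<le> wt \<mu> (\<lambda>n. x n - emb a n)" by (rule sn_le_wt[OF p pu]) (auto intro: x)
    finally have "\<bar>p x - \<mu> a\<bar> \<le> wt \<mu> (\<lambda>n. x n - emb a n)" .
    moreover have "\<bar>ext \<mu> x - \<mu> a\<bar> \<le> wt \<mu> (\<lambda>n. x n - emb a n)" by (rule ext_approx[OF P x])
    ultimately show ?thesis using a by linarith
  qed
  then have "\<bar>p x - ext \<mu> x\<bar> \<le> 0" by (rule field_le_epsilon)
  then show ?thesis by simp
qed

lemma mubar_eq:
  assumes P: "\<mu> \<in> Pset" and x: "x \<in> c00"
  shows "mubar \<mu> x = ext \<mu> x"
  unfolding mubar_def
proof (rule the_equality)
  show "\<exists>p. is_seminorm_c00 p \<and> (\<forall>a. p (emb a) = \<mu> a) \<and> p x = ext \<mu> x"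
    using ext_seminorm[OF P] ext_emb[OF P] by blast
next
  fix r assume "\<exists>p. is_seminorm_c00 p \<and> (\<forall>a. p (emb a) = \<mu> a) \<and> p x = r"
  then obtain p where "is_seminorm_c00 p" "\<forall>a. p (emb a) = \<mu> a" "p x = r" by blast
  then show "r = ext \<mu> x" using ext_unique[OF P _ _ x, of p] by simp
qed

lemma mb_seminorm:
  assumes P: "\<mu> \<in> Pset" shows "is_seminorm_c00 (mubar \<mu>)"
  unfolding is_seminorm_c00_def
proof (intro conjI ballI allI)
  show "0 \<le> mubar \<mu> x" if "x \<in> c00" for x using ext_nonneg[OF P that] mubar_eq[OF P that] by simp
  show "mubar \<mu> (\<lambda>n. x n + y n) \<le> mubar \<mu> x + mubar \<mu> y" if "x \<in> c00" "y \<in> c00" for x y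
    using ext_tri[OF P that] mubar_eq[OF P that(1)] mubar_eq[OF P that(2)] mubar_eq[OF P c00_add[OF that]] by simp
  show "mubar \<mu> (\<lambda>n. c * x n) = \<bar>c\<bar> * mubar \<mu> x" if "x \<in> c00" for x c
    using ext_scale[OF P that] mubar_eq[OF P that] mubar_eq[OF P c00_scale[OF that]] by simp
qed

lemma mb_emb: "\<mu> \<in> Pset \<Longrightarrow> mubar \<mu> (emb a) = \<mu> a"
  by (simp add: mubar_eq c00_emb ext_emb)

lemma mb_approx: "\<mu> \<in> Pset \<Longrightarrow> x \<in> c00 \<Longrightarrow> \<bar>mubar \<mu> x - \<mu> a\<bar> \<le> wt \<mu> (\<lambda>n. x n - emb a n)"
  by (simp add: mubar_eq ext_approx)

lemma X_c00: "s \<in> Xspace \<mu> \<Longrightarrow> s k \<in> c00"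
  by (simp add: Xspace_def)

lemma X_cauchy: "s \<in> Xspace \<mu> \<Longrightarrow> e > 0 \<Longrightarrow> \<exists>N. \<forall>m\<ge>N. \<forall>n\<ge>N. mubar \<mu> (\<lambda>i. s m i - s n i) < e"
  by (simp add: Xspace_def)

lemma XspaceI: "(\<And>k. s k \<in> c00) \<Longrightarrow> (\<And>e. e > 0 \<Longrightarrow> \<exists>N. \<forall>m\<ge>N. \<forall>n\<ge>N. mubar \<mu> (\<lambda>i. s m i - s n i) < e) \<Longrightarrow> s \<in> Xspace \<mu>"
  by (simp add: Xspace_def)

lemma X_conv:
  assumes P: "\<mu> \<in> Pset" and s: "s \<in> Xspace \<mu>"
  shows "(\<lambda>k. mubar \<mu> (s k)) \<longlonglongrightarrow> Xnorm \<mu> s"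
proof -
  have p: "is_seminorm_c00 (mubar \<mu>)" by (rule mb_seminorm[OF P])
  have "Cauchy (\<lambda>k. mubar \<mu> (s k))"
  proof (rule metric_CauchyI)
    fix e :: real assume e: "0 < e"
    obtain N where N: "\<forall>m\<ge>N. \<forall>n\<ge>N. mubar \<mu> (\<lambda>i. s m i - s n i) < e" using X_cauchy[OF s e] by blast
    have "dist (mubar \<mu> (s m)) (mubar \<mu> (s n)) < e" if "m \<ge> N" "n \<ge> N" for m n
    proof -
      have "mubar \<mu> (\<lambda>i. s m i - s n i) < e" using N that by blast
      then show ?thesis using sn_rev[OF p X_c00[OF s] X_c00[OF s], of m n] by (simp add: dist_real_def)
    qed
    then show "\<exists>M. \<forall>m\<ge>M. \<forall>n\<ge>M. dist (mubar \<mu> (s m)) (mubar \<mu> (s n)) < e" by blast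
  qed
  then have "convergent (\<lambda>k. mubar \<mu> (s k))" by (simp add: Cauchy_convergent_iff)
  then show ?thesis unfolding Xnorm_def by (simp add: convergent_LIMSEQ_iff)
qed

lemma X_cst: "x \<in> c00 \<Longrightarrow> \<mu> \<in> Pset \<Longrightarrow> (\<lambda>k. x) \<in> Xspace \<mu>"
  by (rule XspaceI) (auto simp: sn_zero[OF mb_seminorm])

lemma Xn_cst: "x \<in> c00 \<Longrightarrow> \<mu> \<in> Pset \<Longrightarrow> Xnorm \<mu> (\<lambda>k. x) = mubar \<mu> x"
  by (simp add: Xnorm_def)

lemma X_add:
  assumes P: "\<mu> \<in> Pset" and s: "s \<in> Xspace \<mu>" and t: "t \<in> Xspace \<mu>"
  shows "(\<lambda>k i. s k i + t k i) \<in> Xspace \<mu>"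
proof (rule XspaceI)
  have p: "is_seminorm_c00 (mubar \<mu>)" by (rule mb_seminorm[OF P])
  show "(\<lambda>i. s k i + t k i) \<in> c00" for k using X_c00[OF s] X_c00[OF t] by blast
  fix e :: real assume e: "e > 0"
  obtain N1 where N1: "\<forall>m\<ge>N1. \<forall>n\<ge>N1. mubar \<mu> (\<lambda>i. s m i - s n i) < e/2" using X_cauchy[OF s, of "e/2"] e by auto
  obtain N2 where N2: "\<forall>m\<ge>N2. \<forall>n\<ge>N2. mubar \<mu> (\<lambda>i. t m i - t n i) < e/2" using X_cauchy[OF t, of "e/2"] e by auto
  have "mubar \<mu> (\<lambda>i. (s m i + t m i) - (s n i + t n i)) < e" if "m \<ge> max N1 N2" "n \<ge> max N1 N2" for m n
  proof -
    have eq: "(\<lambda>i. (s m i + t m i) - (s n i + t n i)) = (\<lambda>i. (\<lambda>i. s m i - s n i) i + (\<lambda>i. t m i - t n i) i)"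
      by (simp add: fun_eq_iff)
    have "mubar \<mu> (\<lambda>i. (s m i + t m i) - (s n i + t n i)) \<le> mubar \<mu> (\<lambda>i. s m i - s n i) + mubar \<mu> (\<lambda>i. t m i - t n i)"
      unfolding eq by (rule sn_add[OF p c00_diff[OF X_c00[OF s] X_c00[OF s]] c00_diff[OF X_c00[OF t] X_c00[OF t]]])
    then show ?thesis using N1 N2 that by force
  qed
  then show "\<exists>N. \<forall>m\<ge>N. \<forall>n\<ge>N. mubar \<mu> (\<lambda>i. s m i + t m i - (s n i + t n i)) < e" by blast
qed

lemma X_scale:
  assumes P: "\<mu> \<in> Pset" and s: "s \<in> Xspace \<mu>"
  shows "(\<lambda>k i. c * s k i) \<in> Xspace \<mu>"
proof (rule XspaceI)
  have p: "is_seminorm_c00 (mubar \<mu>)" by (rule mb_seminorm[OF P])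
  show "(\<lambda>i. c * s k i) \<in> c00" for k using X_c00[OF s] by blast
  fix e :: real assume e: "e > 0"
  obtain N where N: "\<forall>m\<ge>N. \<forall>n\<ge>N. mubar \<mu> (\<lambda>i. s m i - s n i) < e/(\<bar>c\<bar>+1)"
    using X_cauchy[OF s, of "e/(\<bar>c\<bar>+1)"] e by auto
  have "mubar \<mu> (\<lambda>i. c * s m i - c * s n i) < e" if "m \<ge> N" "n \<ge> N" for m n
  proof -
    have eq: "(\<lambda>i. c * s m i - c * s n i) = (\<lambda>i. c * (s m i - s n i))" by (simp add: fun_eq_iff right_diff_distrib)
    have "mubar \<mu> (\<lambda>i. c * s m i - c * s n i) = \<bar>c\<bar> * mubar \<mu> (\<lambda>i. s m i - s n i)"
      unfolding eq by (rule sn_scale[OF p c00_diff[OF X_c00[OF s] X_c00[OF s]]])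
    also have "\<dots> \<le> \<bar>c\<bar> * (e/(\<bar>c\<bar>+1))"
    proof -
      have "mubar \<mu> (\<lambda>i. s m i - s n i) < e/(\<bar>c\<bar>+1)" using N that by blast
      then show ?thesis by (intro mult_left_mono) auto
    qed
    also have "\<dots> < e" using e by (simp add: field_simps)
    finally show ?thesis .
  qed
  then show "\<exists>N. \<forall>m\<ge>N. \<forall>n\<ge>N. mubar \<mu> (\<lambda>i. c * s m i - c * s n i) < e" by blast
qed

lemma X_diff:
  assumes P: "\<mu> \<in> Pset" and s: "s \<in> Xspace \<mu>" and t: "t \<in> Xspace \<mu>"
  shows "(\<lambda>k i. s k i - t k i) \<in> Xspace \<mu>"
proof -
  have "(\<lambda>k i. s k i + (\<lambda>k i. (-1) * t k i) k i) \<in> Xspace \<mu>"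
    by (rule X_add[OF P s X_scale[OF P t]])
  then show ?thesis by simp
qed

lemma Xn_nonneg: "\<mu> \<in> Pset \<Longrightarrow> s \<in> Xspace \<mu> \<Longrightarrow> 0 \<le> Xnorm \<mu> s"
  by (rule LIMSEQ_le_const[OF X_conv]) (auto intro: sn_nonneg[OF mb_seminorm] X_c00)

lemma Xn_add:
  assumes P: "\<mu> \<in> Pset" and s: "s \<in> Xspace \<mu>" and t: "t \<in> Xspace \<mu>"
  shows "Xnorm \<mu> (\<lambda>k i. s k i + t k i) \<le> Xnorm \<mu> s + Xnorm \<mu> t"
proof (rule LIMSEQ_le[OF X_conv[OF P X_add[OF P s t]] tendsto_add[OF X_conv[OF P s] X_conv[OF P t]]])
  show "\<exists>N. \<forall>n\<ge>N. mubar \<mu> (\<lambda>i. s n i + t n i) \<le> mubar \<mu> (s n) + mubar \<mu> (t n)"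
    using sn_add[OF mb_seminorm[OF P] X_c00[OF s] X_c00[OF t]] by blast
qed

lemma Xn_scale:
  assumes P: "\<mu> \<in> Pset" and s: "s \<in> Xspace \<mu>"
  shows "Xnorm \<mu> (\<lambda>k i. c * s k i) = \<bar>c\<bar> * Xnorm \<mu> s"
proof -
  have "(\<lambda>k. mubar \<mu> (\<lambda>i. c * s k i)) = (\<lambda>k. \<bar>c\<bar> * mubar \<mu> (s k))"
    using sn_scale[OF mb_seminorm[OF P] X_c00[OF s]] by simp
  then have "(\<lambda>k. mubar \<mu> (\<lambda>i. c * s k i)) \<longlonglongrightarrow> \<bar>c\<bar> * Xnorm \<mu> s"
    using tendsto_mult_left[OF X_conv[OF P s]] by simp
  then show ?thesis unfolding Xnorm_def by (rule limI)
qed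

lemma Xn_diff_sym:
  assumes P: "\<mu> \<in> Pset" and s: "s \<in> Xspace \<mu>" and t: "t \<in> Xspace \<mu>"
  shows "Xnorm \<mu> (\<lambda>k i. s k i - t k i) = Xnorm \<mu> (\<lambda>k i. t k i - s k i)"
proof -
  have "Xnorm \<mu> (\<lambda>k i. (-1) * (\<lambda>k i. t k i - s k i) k i) = \<bar>-1\<bar> * Xnorm \<mu> (\<lambda>k i. t k i - s k i)"
    by (rule Xn_scale[OF P X_diff[OF P t s]])
  then show ?thesis by simp
qed

lemma Xn_tri:
  assumes P: "\<mu> \<in> Pset" and s: "s \<in> Xspace \<mu>" and t: "t \<in> Xspace \<mu>" and u: "u \<in> Xspace \<mu>"
  shows "Xnorm \<mu> (\<lambda>k i. s k i - u k i) \<le> Xnorm \<mu> (\<lambda>k i. s k i - t k i) + Xnorm \<mu> (\<lambda>k i. t k i - u k i)"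
proof -
  have "Xnorm \<mu> (\<lambda>k i. (\<lambda>k i. s k i - t k i) k i + (\<lambda>k i. t k i - u k i) k i) \<le> Xnorm \<mu> (\<lambda>k i. s k i - t k i) + Xnorm \<mu> (\<lambda>k i. t k i - u k i)"
    by (rule Xn_add[OF P X_diff[OF P s t] X_diff[OF P t u]])
  then show ?thesis by simp
qed

lemma Xn_tri2:
  assumes P: "\<mu> \<in> Pset" and s: "s \<in> Xspace \<mu>" and t: "t \<in> Xspace \<mu>"
  shows "Xnorm \<mu> s \<le> Xnorm \<mu> (\<lambda>k i. s k i - t k i) + Xnorm \<mu> t"
proof -
  have "Xnorm \<mu> (\<lambda>k i. (\<lambda>k i. s k i - t k i) k i + t k i) \<le> Xnorm \<mu> (\<lambda>k i. s k i - t k i) + Xnorm \<mu> t"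
    by (rule Xn_add[OF P X_diff[OF P s t] t])
  then show ?thesis by simp
qed

lemma X_tail:
  assumes P: "\<mu> \<in> Pset" and s: "s \<in> Xspace \<mu>" and e: "e > 0"
  shows "\<exists>N. \<forall>k\<ge>N. Xnorm \<mu> (\<lambda>m i. s m i - s k i) \<le> e"
proof -
  obtain N where N: "\<forall>m\<ge>N. \<forall>n\<ge>N. mubar \<mu> (\<lambda>i. s m i - s n i) < e" using X_cauchy[OF s e] by blast
  have "Xnorm \<mu> (\<lambda>m i. s m i - s k i) \<le> e" if k: "k \<ge> N" for k
  proof -
    have sk: "(\<lambda>m i. s m i - s k i) \<in> Xspace \<mu>" using X_diff[OF P s X_cst[OF X_c00[OF s] P]] by simp
    show ?thesis
      by (rule LIMSEQ_le_const2[OF X_conv[OF P sk]]) (use N k in \<open>auto intro!: less_imp_le\<close>)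
  qed
  then show ?thesis by blast
qed

lemma Xball_zero: "\<mu> \<in> Pset \<Longrightarrow> (\<lambda>k i. 0) \<in> Xball \<mu>"
  unfolding Xball_def using X_cst[OF c00_zero] Xn_cst[OF c00_zero] sn_zero[OF mb_seminorm] by auto

definition lin :: "(V \<Rightarrow> real) \<Rightarrow> ((nat \<Rightarrow> nat \<Rightarrow> real) \<Rightarrow> real) \<Rightarrow> bool" where
  "lin \<mu> F \<longleftrightarrow> (\<forall>s\<in>Xspace \<mu>. \<forall>t\<in>Xspace \<mu>. F (\<lambda>k i. s k i + t k i) = F s + F t) \<and>
     (\<forall>c. \<forall>s\<in>Xspace \<mu>. F (\<lambda>k i. c * s k i) = c * F s)"

definition bnd :: "(V \<Rightarrow> real) \<Rightarrow> ((nat \<Rightarrow> nat \<Rightarrow> real) \<Rightarrow> real) \<Rightarrow> bool" where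
  "bnd \<mu> F \<longleftrightarrow> (\<forall>s\<in>Xspace \<mu>. \<bar>F s\<bar> \<le> Xnorm \<mu> s)"

lemma lin_add: "lin \<mu> F \<Longrightarrow> s \<in> Xspace \<mu> \<Longrightarrow> t \<in> Xspace \<mu> \<Longrightarrow> F (\<lambda>k i. s k i + t k i) = F s + F t"
  by (simp add: lin_def)
lemma lin_scale: "lin \<mu> F \<Longrightarrow> s \<in> Xspace \<mu> \<Longrightarrow> F (\<lambda>k i. c * s k i) = c * F s"
  by (simp add: lin_def)
lemma lin_diff:
  assumes L: "lin \<mu> F" and P: "\<mu> \<in> Pset" and s: "s \<in> Xspace \<mu>" and t: "t \<in> Xspace \<mu>"
  shows "F (\<lambda>k i. s k i - t k i) = F s - F t"
proof -
  have "F (\<lambda>k i. s k i + (\<lambda>k i. (-1) * t k i) k i) = F s + F (\<lambda>k i. (-1) * t k i)"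
    by (rule lin_add[OF L s X_scale[OF P t]])
  then show ?thesis using lin_scale[OF L t, of "-1"] by simp
qed

lemma bndD: "bnd \<mu> F \<Longrightarrow> s \<in> Xspace \<mu> \<Longrightarrow> \<bar>F s\<bar> \<le> Xnorm \<mu> s"
  by (simp add: bnd_def)

lemma mb_unit: "\<mu> \<in> Pset \<Longrightarrow> mubar \<mu> (unitv n) = \<mu> (E n)"
  using mb_emb[of \<mu> "E n"] by (simp add: emb_E)

lemma mb_le_wt: "\<mu> \<in> Pset \<Longrightarrow> x \<in> c00 \<Longrightarrow> mubar \<mu> x \<le> wt \<mu> x"
  by (rule sn_le_wt[OF mb_seminorm mb_unit])

lemma approx_X:
  assumes P: "\<mu> \<in> Pset" and L: "lin \<mu> F" and B: "bnd \<mu> F" and s: "s \<in> Xspace \<mu>"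
    and s1: "Xnorm \<mu> s \<le> 1" and Fs: "F s > \<beta>" and eta: "\<eta> > 0"
  shows "\<exists>a. \<mu> a < 1 \<and> F (\<lambda>k. emb a) > \<beta> \<and> Xnorm \<mu> (\<lambda>k i. s k i - emb a i) < \<eta>"
proof -
  define \<gamma> where "\<gamma> = F s - \<beta>"
  have g: "\<gamma> > 0" using Fs by (simp add: \<gamma>_def)
  define A where "A = \<bar>F s\<bar>"
  have A0: "A \<ge> 0" by (simp add: A_def)
  define l where "l = min (1/2) (min (\<gamma> / (2*(A+1))) (\<eta>/3))"
  have l0: "l > 0" using g eta A0 by (simp add: l_def)
  have l1: "l \<le> 1/2" "l \<le> \<eta>/3" "l \<le> \<gamma> / (2*(A+1))" unfolding l_def by linarith+
  have lA: "l * A \<le> \<gamma>/2"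
  proof -
    have "l * A \<le> \<gamma> / (2*(A+1)) * A" by (rule mult_right_mono[OF l1(3) A0])
    also have "\<dots> \<le> \<gamma> / (2*(A+1)) * (A + 1)" by (rule mult_left_mono) (use g A0 in auto)
    also have "\<dots> = \<gamma>/2" using A0 by (simp add: field_simps)
    finally show ?thesis .
  qed
  define s' where "s' = (\<lambda>k i. (1 - l) * s k i)"
  have s'X: "s' \<in> Xspace \<mu>" unfolding s'_def by (rule X_scale[OF P s])
  have Fs': "F s' = (1 - l) * F s" unfolding s'_def by (rule lin_scale[OF L s])
  have "l * F s \<le> l * A" unfolding A_def using l0 by (intro mult_left_mono) auto
  moreover have "F s' = F s - l * F s" using Fs' by (simp add: algebra_simps)
  ultimately have Fs'b: "F s' \<ge> \<beta> + \<gamma>/2" using lA unfolding \<gamma>_def by argo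
  have Xs': "Xnorm \<mu> s' \<le> 1 - l"
  proof -
    have "Xnorm \<mu> s' = \<bar>1 - l\<bar> * Xnorm \<mu> s" unfolding s'_def by (rule Xn_scale[OF P s])
    also have "\<dots> = (1 - l) * Xnorm \<mu> s" using l1 by simp
    also have "\<dots> \<le> (1 - l) * 1" using s1 l1 by (intro mult_left_mono) auto
    finally show ?thesis by simp
  qed
  have Xss': "Xnorm \<mu> (\<lambda>k i. s k i - s' k i) \<le> l"
  proof -
    have "(\<lambda>k i. s k i - s' k i) = (\<lambda>k i. l * s k i)" by (simp add: s'_def fun_eq_iff algebra_simps)
    then have "Xnorm \<mu> (\<lambda>k i. s k i - s' k i) = \<bar>l\<bar> * Xnorm \<mu> s" using Xn_scale[OF P s, of l] by simp
    also have "\<dots> = l * Xnorm \<mu> s" using l0 by simp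
    also have "\<dots> \<le> l * 1" using s1 l0 by (intro mult_left_mono) auto
    finally show ?thesis by simp
  qed
  define \<delta> where "\<delta> = min (l/3) (min (\<gamma>/6) (\<eta>/3))"
  have d0: "\<delta> > 0" using l0 g eta by (simp add: \<delta>_def)
  have d1: "\<delta> \<le> l/3" "\<delta> \<le> \<gamma>/6" "\<delta> \<le> \<eta>/3" by (simp_all add: \<delta>_def)
  obtain N where N: "\<forall>k\<ge>N. Xnorm \<mu> (\<lambda>m i. s' m i - s' k i) \<le> \<delta>/2" using X_tail[OF P s'X, of "\<delta>/2"] d0 by auto
  define x where "x = s' N"
  have xc: "x \<in> c00" unfolding x_def by (rule X_c00[OF s'X])
  have cx: "(\<lambda>k. x) \<in> Xspace \<mu>" by (rule X_cst[OF xc P])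
  have d2: "Xnorm \<mu> (\<lambda>m i. s' m i - x i) \<le> \<delta>/2" using N unfolding x_def by blast
  have s'x: "(\<lambda>m i. s' m i - x i) \<in> Xspace \<mu>" using X_diff[OF P s'X cx] by simp
  have px: "mubar \<mu> x \<le> 1 - l + \<delta>/2"
  proof -
    have "Xnorm \<mu> (\<lambda>k. x) \<le> Xnorm \<mu> (\<lambda>k i. x i - s' k i) + Xnorm \<mu> s'" using Xn_tri2[OF P cx s'X] by simp
    also have "Xnorm \<mu> (\<lambda>k i. x i - s' k i) = Xnorm \<mu> (\<lambda>k i. s' k i - x i)" using Xn_diff_sym[OF P cx s'X] by simp
    finally show ?thesis using d2 Xs' Xn_cst[OF xc P] by simp
  qed
  have Fx: "F (\<lambda>k. x) \<ge> \<beta> + \<gamma>/2 - \<delta>/2"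
  proof -
    have "F (\<lambda>m i. s' m i - x i) = F s' - F (\<lambda>k. x)" using lin_diff[OF L P s'X cx] by simp
    moreover have "\<bar>F (\<lambda>m i. s' m i - x i)\<bar> \<le> \<delta>/2" using bndD[OF B s'x] d2 by simp
    ultimately show ?thesis using Fs'b by linarith
  qed
  obtain a where a: "wt \<mu> (\<lambda>n. x n - emb a n) < \<delta>" using approx_rat[OF P xc d0] by blast
  have ma: "\<mu> a < 1"
    using mb_approx[OF P xc, of a] a px d1 l0 by linarith
  have ca: "(\<lambda>k. emb a) \<in> Xspace \<mu>" by (rule X_cst[OF c00_emb P])
  have xa: "(\<lambda>i. x i - emb a i) \<in> c00" using xc by blast
  have Xxa: "Xnorm \<mu> (\<lambda>k i. x i - emb a i) < \<delta>"
    using Xn_cst[OF xa P] mb_le_wt[OF P xa] a by simp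
  have cxa: "(\<lambda>k i. x i - emb a i) \<in> Xspace \<mu>" by (rule X_cst[OF xa P])
  have Fa: "F (\<lambda>k. emb a) > \<beta>"
  proof -
    have "F (\<lambda>k i. x i - emb a i) = F (\<lambda>k. x) - F (\<lambda>k. emb a)" using lin_diff[OF L P cx ca] by simp
    moreover have "\<bar>F (\<lambda>k i. x i - emb a i)\<bar> < \<delta>" using bndD[OF B cxa] Xxa by simp
    ultimately show ?thesis using Fx d1 g by linarith
  qed
  have tr1: "Xnorm \<mu> (\<lambda>k i. s k i - emb a i) \<le> Xnorm \<mu> (\<lambda>k i. s k i - s' k i) + Xnorm \<mu> (\<lambda>k i. s' k i - emb a i)"
    using Xn_tri[OF P s s'X ca] by simp
  have tr2: "Xnorm \<mu> (\<lambda>k i. s' k i - emb a i) \<le> Xnorm \<mu> (\<lambda>k i. s' k i - x i) + Xnorm \<mu> (\<lambda>k i. x i - emb a i)"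
    using Xn_tri[OF P s'X cx ca] by simp
  have "Xnorm \<mu> (\<lambda>k i. s k i - emb a i) < \<eta>" using tr1 tr2 Xss' d2 Xxa l1 d1 eta by linarith
  then show ?thesis using ma Fa by blast
qed

definition Gf :: "(V \<Rightarrow> real) \<Rightarrow> (nat \<Rightarrow> real) \<Rightarrow> (nat \<Rightarrow> real) \<Rightarrow> real" where
  "Gf \<mu> t x = (\<Sum>n\<in>{n. x n \<noteq> 0}. x n * t n * \<mu> (E n))"

lemma G_eq: "finite S \<Longrightarrow> {n. x n \<noteq> 0} \<subseteq> S \<Longrightarrow> Gf \<mu> t x = (\<Sum>n\<in>S. x n * t n * \<mu> (E n))"
  unfolding Gf_def by (rule sum.mono_neutral_left) auto

lemma G_add:
  assumes x: "x \<in> c00" and y: "y \<in> c00"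
  shows "Gf \<mu> t (\<lambda>n. x n + y n) = Gf \<mu> t x + Gf \<mu> t y"
proof -
  define S where "S = {n. x n \<noteq> 0} \<union> {n. y n \<noteq> 0}"
  have fS: "finite S" using x y by (simp add: S_def c00_def)
  have "Gf \<mu> t (\<lambda>n. x n + y n) = (\<Sum>n\<in>S. (x n + y n) * t n * \<mu> (E n))" by (rule G_eq[OF fS]) (auto simp: S_def)
  also have "\<dots> = (\<Sum>n\<in>S. x n * t n * \<mu> (E n)) + (\<Sum>n\<in>S. y n * t n * \<mu> (E n))"
    by (simp add: sum.distrib distrib_right)
  also have "\<dots> = Gf \<mu> t x + Gf \<mu> t y" using G_eq[OF fS, of x] G_eq[OF fS, of y] by (simp add: S_def)
  finally show ?thesis .
qed

lemma G_scale:
  assumes x: "x \<in> c00"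
  shows "Gf \<mu> t (\<lambda>n. c * x n) = c * Gf \<mu> t x"
proof -
  define S where "S = {n. x n \<noteq> 0}"
  have fS: "finite S" using x by (simp add: S_def c00_def)
  have "Gf \<mu> t (\<lambda>n. c * x n) = (\<Sum>n\<in>S. (c * x n) * t n * \<mu> (E n))" by (rule G_eq[OF fS]) (auto simp: S_def)
  also have "\<dots> = c * Gf \<mu> t x" using G_eq[OF fS, of x] by (simp add: S_def sum_distrib_left mult.assoc)
  finally show ?thesis .
qed

lemma G_diff:
  assumes x: "x \<in> c00" and y: "y \<in> c00"
  shows "Gf \<mu> t (\<lambda>n. x n - y n) = Gf \<mu> t x - Gf \<mu> t y"
proof -
  have "Gf \<mu> t (\<lambda>n. x n + (\<lambda>n. (-1) * y n) n) = Gf \<mu> t x + Gf \<mu> t (\<lambda>n. (-1) * y n)"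
    by (rule G_add[OF x c00_scale[OF y]])
  then show ?thesis using G_scale[OF y, of \<mu> t "-1"] by simp
qed

lemma G_wt:
  assumes P: "\<mu> \<in> Pset" and t: "\<forall>n. t n \<in> {-1..1}" and x: "x \<in> c00"
  shows "\<bar>Gf \<mu> t x\<bar> \<le> wt \<mu> x"
proof -
  have "\<bar>Gf \<mu> t x\<bar> \<le> (\<Sum>n\<in>{n. x n \<noteq> 0}. \<bar>x n * t n * \<mu> (E n)\<bar>)" unfolding Gf_def by (rule sum_abs)
  also have "\<dots> \<le> (\<Sum>n\<in>{n. x n \<noteq> 0}. \<bar>x n\<bar> * \<mu> (E n))"
  proof (rule sum_mono)
    fix n
    have m: "0 \<le> \<mu> (E n)" by (rule Pset_nonneg[OF P])
    have "t n \<in> {-1..1}" using t by blast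
    then have tn: "\<bar>t n\<bar> \<le> 1" by auto
    have "\<bar>x n * t n * \<mu> (E n)\<bar> = \<bar>x n\<bar> * (\<bar>t n\<bar> * \<mu> (E n))" using m by (simp add: abs_mult mult.assoc)
    also have "\<dots> \<le> \<bar>x n\<bar> * (1 * \<mu> (E n))" using tn m by (intro mult_left_mono mult_right_mono) auto
    finally show "\<bar>x n * t n * \<mu> (E n)\<bar> \<le> \<bar>x n\<bar> * \<mu> (E n)" by simp
  qed
  finally show ?thesis by (simp add: wt_def)
qed

lemma G_emb: "Gf \<mu> t (emb a) = gsum \<mu> t a"
  unfolding Gf_def gsum_def emb_supp by (simp add: emb_def)

lemma G_p:
  assumes P: "\<mu> \<in> Pset" and t: "\<forall>n. t n \<in> {-1..1}" and g: "\<forall>a. \<bar>gsum \<mu> t a\<bar> \<le> \<mu> a" and x: "x \<in> c00"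
  shows "\<bar>Gf \<mu> t x\<bar> \<le> mubar \<mu> x"
proof (rule field_le_epsilon)
  fix e :: real assume e: "0 < e"
  obtain a where a: "wt \<mu> (\<lambda>n. x n - emb a n) < e/2" using approx_rat[OF P x, of "e/2"] e by auto
  have xa: "(\<lambda>n. x n - emb a n) \<in> c00" using x by blast
  have "\<bar>Gf \<mu> t (\<lambda>n. x n - emb a n)\<bar> \<le> wt \<mu> (\<lambda>n. x n - emb a n)" by (rule G_wt[OF P t xa])
  moreover have "Gf \<mu> t (\<lambda>n. x n - emb a n) = Gf \<mu> t x - gsum \<mu> t a" using G_diff[OF x c00_emb] G_emb by simp
  moreover have "\<bar>mubar \<mu> x - \<mu> a\<bar> \<le> wt \<mu> (\<lambda>n. x n - emb a n)" by (rule mb_approx[OF P x])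
  moreover have "\<bar>gsum \<mu> t a\<bar> \<le> \<mu> a" using g by blast
  ultimately show "\<bar>Gf \<mu> t x\<bar> \<le> mubar \<mu> x + e" using a by linarith
qed

definition Ff :: "(V \<Rightarrow> real) \<Rightarrow> (nat \<Rightarrow> real) \<Rightarrow> (nat \<Rightarrow> nat \<Rightarrow> real) \<Rightarrow> real" where
  "Ff \<mu> t s = lim (\<lambda>k. Gf \<mu> t (s k))"

locale gctx =
  fixes \<mu> t
  assumes P: "\<mu> \<in> Pset" and t: "\<forall>n. t n \<in> {-1..1}" and g: "\<forall>a. \<bar>gsum \<mu> t a\<bar> \<le> \<mu> a"
begin

lemma Gp: "x \<in> c00 \<Longrightarrow> \<bar>Gf \<mu> t x\<bar> \<le> mubar \<mu> x"
  by (rule G_p[OF P t g])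

lemma Ff_conv:
  assumes s: "s \<in> Xspace \<mu>"
  shows "(\<lambda>k. Gf \<mu> t (s k)) \<longlonglongrightarrow> Ff \<mu> t s"
proof -
  have "Cauchy (\<lambda>k. Gf \<mu> t (s k))"
  proof (rule metric_CauchyI)
    fix e :: real assume e: "0 < e"
    obtain N where N: "\<forall>m\<ge>N. \<forall>n\<ge>N. mubar \<mu> (\<lambda>i. s m i - s n i) < e" using X_cauchy[OF s e] by blast
    have "dist (Gf \<mu> t (s m)) (Gf \<mu> t (s n)) < e" if "m \<ge> N" "n \<ge> N" for m n
    proof -
      have "mubar \<mu> (\<lambda>i. s m i - s n i) < e" using N that by blast
      moreover have "\<bar>Gf \<mu> t (\<lambda>i. s m i - s n i)\<bar> \<le> mubar \<mu> (\<lambda>i. s m i - s n i)"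
        by (rule Gp[OF c00_diff[OF X_c00[OF s] X_c00[OF s]]])
      moreover have "Gf \<mu> t (\<lambda>i. s m i - s n i) = Gf \<mu> t (s m) - Gf \<mu> t (s n)"
        by (rule G_diff[OF X_c00[OF s] X_c00[OF s]])
      ultimately show ?thesis by (simp add: dist_real_def)
    qed
    then show "\<exists>M. \<forall>m\<ge>M. \<forall>n\<ge>M. dist (Gf \<mu> t (s m)) (Gf \<mu> t (s n)) < e" by blast
  qed
  then have "convergent (\<lambda>k. Gf \<mu> t (s k))" by (simp add: Cauchy_convergent_iff)
  then show ?thesis unfolding Ff_def by (simp add: convergent_LIMSEQ_iff)
qed

lemma Ff_lin: "lin \<mu> (Ff \<mu> t)"
  unfolding lin_def
proof (intro conjI ballI allI)
  fix s u assume s: "s \<in> Xspace \<mu>" and u: "u \<in> Xspace \<mu>"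
  have "(\<lambda>k. Gf \<mu> t (\<lambda>i. s k i + u k i)) \<longlonglongrightarrow> Ff \<mu> t (\<lambda>k i. s k i + u k i)"
    using Ff_conv[OF X_add[OF P s u]] by simp
  moreover have "(\<lambda>k. Gf \<mu> t (\<lambda>i. s k i + u k i)) = (\<lambda>k. Gf \<mu> t (s k) + Gf \<mu> t (u k))"
    using G_add[OF X_c00[OF s] X_c00[OF u]] by simp
  ultimately have "(\<lambda>k. Gf \<mu> t (s k) + Gf \<mu> t (u k)) \<longlonglongrightarrow> Ff \<mu> t (\<lambda>k i. s k i + u k i)" by simp
  then show "Ff \<mu> t (\<lambda>k i. s k i + u k i) = Ff \<mu> t s + Ff \<mu> t u"
    using tendsto_add[OF Ff_conv[OF s] Ff_conv[OF u]] LIMSEQ_unique by blast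
next
  fix c and s assume s: "s \<in> Xspace \<mu>"
  have "(\<lambda>k. Gf \<mu> t (\<lambda>i. c * s k i)) \<longlonglongrightarrow> Ff \<mu> t (\<lambda>k i. c * s k i)"
    using Ff_conv[OF X_scale[OF P s]] by simp
  moreover have "(\<lambda>k. Gf \<mu> t (\<lambda>i. c * s k i)) = (\<lambda>k. c * Gf \<mu> t (s k))"
    using G_scale[OF X_c00[OF s]] by simp
  ultimately have "(\<lambda>k. c * Gf \<mu> t (s k)) \<longlonglongrightarrow> Ff \<mu> t (\<lambda>k i. c * s k i)" by simp
  then show "Ff \<mu> t (\<lambda>k i. c * s k i) = c * Ff \<mu> t s"
    using tendsto_mult_left[OF Ff_conv[OF s]] LIMSEQ_unique by blast
qed

lemma Ff_bnd: "bnd \<mu> (Ff \<mu> t)"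
  unfolding bnd_def
proof
  fix s assume s: "s \<in> Xspace \<mu>"
  show "\<bar>Ff \<mu> t s\<bar> \<le> Xnorm \<mu> s"
    by (rule LIMSEQ_le[OF tendsto_rabs[OF Ff_conv[OF s]] X_conv[OF P s]]) (use Gp X_c00[OF s] in blast)
qed

lemma Ff_cst: "x \<in> c00 \<Longrightarrow> Ff \<mu> t (\<lambda>k. x) = Gf \<mu> t x"
  by (simp add: Ff_def)

end

lemma dir1:
  assumes P: "\<mu> \<in> Pset" and C: "cnd \<epsilon> \<alpha> a0 \<mu> t" and al: "0 < \<alpha>" "\<alpha> \<le> 1/2"
  shows "\<exists>F \<beta>. is_Xfunctional \<mu> F \<and> dualnorm \<mu> F = 1 \<and> \<beta> > 0 \<and> Xdiam \<mu> (slice \<mu> F \<beta>) \<le> \<epsilon>"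
proof -
  have t: "\<forall>n. t n \<in> {-1..1}" and g: "\<forall>a. \<bar>gsum \<mu> t a\<bar> \<le> \<mu> a" and a01: "\<mu> a0 \<le> 1"
    and a0g: "1 - \<alpha>/4 \<le> gsum \<mu> t a0"
    and Z3: "\<And>a b. 1 \<le> \<mu> a \<or> 1 \<le> \<mu> b \<or> gsum \<mu> t a \<le> 1 - \<alpha> \<or> gsum \<mu> t b \<le> 1 - \<alpha> \<or> \<mu> (vminus a b) \<le> \<epsilon>"
    using C unfolding cnd_def by blast+
  interpret gctx \<mu> t using P t g by unfold_locales
  define F0 where "F0 = Ff \<mu> t"
  have L: "lin \<mu> F0" unfolding F0_def by (rule Ff_lin)
  have B: "bnd \<mu> F0" unfolding F0_def by (rule Ff_bnd)
  define SB where "SB = {\<bar>F0 s\<bar> | s. s \<in> Xball \<mu>}"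
  define d where "d = Sup SB"
  have SBne: "SB \<noteq> {}" using Xball_zero[OF P] by (auto simp: SB_def)
  have SB1: "\<And>v. v \<in> SB \<Longrightarrow> v \<le> 1"
  proof -
    fix v assume "v \<in> SB"
    then obtain s where v: "v = \<bar>F0 s\<bar>" and s: "s \<in> Xball \<mu>" by (auto simp: SB_def)
    have "s \<in> Xspace \<mu>" "Xnorm \<mu> s \<le> 1" using s by (auto simp: Xball_def)
    then show "v \<le> 1" using bndD[OF B] v by force
  qed
  have SBbdd: "bdd_above SB" by (rule bdd_aboveI[of _ 1]) (rule SB1)
  have d1: "d \<le> 1" unfolding d_def by (rule cSup_least[OF SBne SB1])
  have ca0: "(\<lambda>k. emb a0) \<in> Xball \<mu>"
    unfolding Xball_def using X_cst[OF c00_emb P] Xn_cst[OF c00_emb P] mb_emb[OF P] a01 by simp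
  have F0a0: "F0 (\<lambda>k. emb a0) = gsum \<mu> t a0" unfolding F0_def using Ff_cst[OF c00_emb] G_emb by simp
  have "\<bar>F0 (\<lambda>k. emb a0)\<bar> \<in> SB" using ca0 by (auto simp: SB_def)
  then have "\<bar>F0 (\<lambda>k. emb a0)\<bar> \<le> d" unfolding d_def by (rule cSup_upper[OF _ SBbdd])
  then have d0: "d \<ge> 1 - \<alpha>/4" using F0a0 a0g by linarith
  have dpos: "d > 0" using d0 al by linarith
  have dSB: "\<And>s. s \<in> Xball \<mu> \<Longrightarrow> \<bar>F0 s\<bar> \<le> d"
    unfolding d_def by (rule cSup_upper[OF _ SBbdd]) (auto simp: SB_def)
  define F where "F = (\<lambda>s. F0 s / d)"
  have isF: "is_Xfunctional \<mu> F"
    unfolding is_Xfunctional_def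
  proof (intro conjI ballI allI)
    fix s u assume "s \<in> Xspace \<mu>" "u \<in> Xspace \<mu>"
    then show "F (\<lambda>k i. s k i + u k i) = F s + F u" unfolding F_def using lin_add[OF L] by (simp add: add_divide_distrib)
  next
    fix c s assume "s \<in> Xspace \<mu>"
    then show "F (\<lambda>k i. c * s k i) = c * F s" unfolding F_def using lin_scale[OF L] by simp
  next
    show "\<exists>C. \<forall>s\<in>Xspace \<mu>. \<bar>F s\<bar> \<le> C * Xnorm \<mu> s"
    proof (intro exI ballI)
      fix s assume s: "s \<in> Xspace \<mu>"
      have "\<bar>F s\<bar> = \<bar>F0 s\<bar> / d" unfolding F_def using dpos by simp
      also have "\<dots> \<le> Xnorm \<mu> s / d" using bndD[OF B s] dpos by (simp add: divide_right_mono)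
      finally show "\<bar>F s\<bar> \<le> (1/d) * Xnorm \<mu> s" by simp
    qed
  qed
  have dn: "dualnorm \<mu> F = 1"
    unfolding dualnorm_def
  proof (rule cSup_eq_non_empty)
    show "{\<bar>F s\<bar> |s. s \<in> Xball \<mu>} \<noteq> {}" using Xball_zero[OF P] by auto
  next
    fix v assume "v \<in> {\<bar>F s\<bar> |s. s \<in> Xball \<mu>}"
    then obtain s where v: "v = \<bar>F s\<bar>" and s: "s \<in> Xball \<mu>" by auto
    have "v = \<bar>F0 s\<bar> / d" unfolding v F_def using dpos by simp
    also have "\<dots> \<le> d / d" using dSB[OF s] dpos by (simp add: divide_right_mono)
    finally show "v \<le> 1" using dpos by simp
  next
    fix y assume y: "\<And>v. v \<in> {\<bar>F s\<bar> |s. s \<in> Xball \<mu>} \<Longrightarrow> v \<le> y"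
    have "\<And>v. v \<in> SB \<Longrightarrow> v \<le> y * d"
    proof -
      fix v assume "v \<in> SB"
      then obtain s where v: "v = \<bar>F0 s\<bar>" and s: "s \<in> Xball \<mu>" by (auto simp: SB_def)
      have "\<bar>F s\<bar> \<le> y" using y s by blast
      then have "\<bar>F0 s\<bar> / d \<le> y" unfolding F_def using dpos by simp
      then show "v \<le> y * d" unfolding v using dpos by (simp add: divide_le_eq)
    qed
    then have "d \<le> y * d" unfolding d_def[symmetric] using cSup_least[OF SBne] unfolding d_def by blast
    then show "1 \<le> y" using dpos by simp
  qed
  define \<beta> where "\<beta> = \<alpha>/2"
  have bpos: "\<beta> > 0" using al by (simp add: \<beta>_def)
  have inslice: "F0 s > 1 - \<alpha>" if s: "s \<in> slice \<mu> F \<beta>" for s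
  proof -
    have "F0 s / d > 1 - \<alpha>/2" using s by (simp add: slice_def F_def \<beta>_def)
    then have "F0 s > (1 - \<alpha>/2) * d" using dpos by (simp add: less_divide_eq)
    moreover have "(1 - \<alpha>/2) * d \<ge> (1 - \<alpha>/2) * (1 - \<alpha>/4)" using d0 al by (intro mult_left_mono) auto
    moreover have "(1 - \<alpha>/2) * (1 - \<alpha>/4) > 1 - \<alpha>"
    proof -
      have "(1 - \<alpha>/2) * (1 - \<alpha>/4) = 1 - 3*\<alpha>/4 + \<alpha>*\<alpha>/8" by (simp add: algebra_simps)
      moreover have "\<alpha>*\<alpha> \<ge> 0" by simp
      ultimately show ?thesis using al by linarith
    qed
    ultimately show ?thesis by linarith
  qed
  have a0sl: "(\<lambda>k. emb a0) \<in> slice \<mu> F \<beta>"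
  proof -
    have "gsum \<mu> t a0 / d \<ge> gsum \<mu> t a0" using d1 dpos a0g al
      by (simp add: le_divide_eq mult_left_le)
    moreover have "F (\<lambda>k. emb a0) = gsum \<mu> t a0 / d" by (simp add: F_def F0a0)
    ultimately have "F (\<lambda>k. emb a0) > 1 - \<beta>" using a0g al unfolding \<beta>_def by linarith
    then show ?thesis using ca0 by (simp add: slice_def)
  qed
  have diam: "Xdiam \<mu> (slice \<mu> F \<beta>) \<le> \<epsilon>"
    unfolding Xdiam_def
  proof (rule cSup_least)
    show "{Xdist \<mu> s u |s u. s \<in> slice \<mu> F \<beta> \<and> u \<in> slice \<mu> F \<beta>} \<noteq> {}" using a0sl by blast
  next
    fix v assume "v \<in> {Xdist \<mu> s u |s u. s \<in> slice \<mu> F \<beta> \<and> u \<in> slice \<mu> F \<beta>}"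
    then obtain s u where v: "v = Xdist \<mu> s u" and s: "s \<in> slice \<mu> F \<beta>" and u: "u \<in> slice \<mu> F \<beta>" by blast
    have sX: "s \<in> Xspace \<mu>" "Xnorm \<mu> s \<le> 1" using s by (auto simp: slice_def Xball_def)
    have uX: "u \<in> Xspace \<mu>" "Xnorm \<mu> u \<le> 1" using u by (auto simp: slice_def Xball_def)
    show "v \<le> \<epsilon>"
    proof (rule field_le_epsilon)
      fix e :: real assume e: "0 < e"
      obtain a where a: "\<mu> a < 1" "F0 (\<lambda>k. emb a) > 1 - \<alpha>" "Xnorm \<mu> (\<lambda>k i. s k i - emb a i) < e/2"
        using approx_X[OF P L B sX(1) sX(2) inslice[OF s], of "e/2"] e by auto
      obtain b where b: "\<mu> b < 1" "F0 (\<lambda>k. emb b) > 1 - \<alpha>" "Xnorm \<mu> (\<lambda>k i. u k i - emb b i) < e/2"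
        using approx_X[OF P L B uX(1) uX(2) inslice[OF u], of "e/2"] e by auto
      have ga: "gsum \<mu> t a > 1 - \<alpha>" using a(2) unfolding F0_def using Ff_cst[OF c00_emb] G_emb by simp
      have gb: "gsum \<mu> t b > 1 - \<alpha>" using b(2) unfolding F0_def using Ff_cst[OF c00_emb] G_emb by simp
      have mab: "\<mu> (vminus a b) \<le> \<epsilon>" using Z3[of a b] a(1) b(1) ga gb by linarith
      have ca: "(\<lambda>k. emb a) \<in> Xspace \<mu>" by (rule X_cst[OF c00_emb P])
      have cb: "(\<lambda>k. emb b) \<in> Xspace \<mu>" by (rule X_cst[OF c00_emb P])
      have ab: "Xnorm \<mu> (\<lambda>k i. emb a i - emb b i) = \<mu> (vminus a b)"
        using Xn_cst[OF c00_diff[OF c00_emb c00_emb] P, of a b] mb_emb[OF P, of "vminus a b"]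
        by (simp add: emb_vminus)
      have t1: "Xnorm \<mu> (\<lambda>k i. s k i - u k i) \<le> Xnorm \<mu> (\<lambda>k i. s k i - emb a i) + Xnorm \<mu> (\<lambda>k i. emb a i - u k i)"
        using Xn_tri[OF P sX(1) ca uX(1)] by simp
      have t2: "Xnorm \<mu> (\<lambda>k i. emb a i - u k i) \<le> Xnorm \<mu> (\<lambda>k i. emb a i - emb b i) + Xnorm \<mu> (\<lambda>k i. emb b i - u k i)"
        using Xn_tri[OF P ca cb uX(1)] by simp
      have t3: "Xnorm \<mu> (\<lambda>k i. emb b i - u k i) = Xnorm \<mu> (\<lambda>k i. u k i - emb b i)"
        using Xn_diff_sym[OF P cb uX(1)] by simp
      have "v = Xnorm \<mu> (\<lambda>k i. s k i - u k i)" by (simp add: v Xdist_def)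
      then show "v \<le> \<epsilon> + e" using t1 t2 t3 ab mab a(3) b(3) by linarith
    qed
  qed
  show ?thesis using isF dn bpos diam by blast
qed

lemma unitv_sum: "finite S \<Longrightarrow> (\<Sum>n\<in>S. c n * unitv n i) = (if i \<in> S then c i else 0)"
proof -
  assume S: "finite S"
  have "(\<Sum>n\<in>S. c n * unitv n i) = (\<Sum>n\<in>S. if n = i then c n else 0)"
    by (rule sum.cong) (auto simp: unitv_def)
  also have "\<dots> = (if i \<in> S then c i else 0)" using S by (simp add: sum.delta')
  finally show ?thesis .
qed

lemma emb_as_sum: "emb a = (\<lambda>i. \<Sum>n\<in>{n. Rep_V a n \<noteq> 0}. real_of_rat (Rep_V a n) * unitv n i)"
  by (rule ext) (simp add: unitv_sum[OF finite_supp] emb_def)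

lemma lin_zero:
  assumes P: "\<mu> \<in> Pset" and L: "lin \<mu> F"
  shows "F (\<lambda>k i. 0) = 0"
proof -
  have z: "(\<lambda>k i. 0::real) \<in> Xspace \<mu>" using X_cst[OF c00_zero P] by simp
  have "F (\<lambda>k i. 0 * (\<lambda>k i. 0::real) k i) = 0 * F (\<lambda>k i. 0)" by (rule lin_scale[OF L z])
  then show ?thesis by simp
qed

lemma lin_sum:
  assumes P: "\<mu> \<in> Pset" and L: "lin \<mu> F" and S: "finite S"
  shows "F (\<lambda>k i. \<Sum>n\<in>S. c n * unitv n i) = (\<Sum>n\<in>S. c n * F (\<lambda>k. unitv n))"
  using S
proof (induction S rule: finite_induct)
  case empty
  then show ?case using lin_zero[OF P L] by simp
next
  case (insert m S)
  have u: "(\<lambda>k. unitv m) \<in> Xspace \<mu>" by (rule X_cst[OF c00_unitv P])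
  have su: "(\<lambda>k i. c m * unitv m i) \<in> Xspace \<mu>" using X_scale[OF P u] by simp
  have rest: "(\<lambda>k i. \<Sum>n\<in>S. c n * unitv n i) \<in> Xspace \<mu>"
    using X_cst[OF c00_sum[OF insert.hyps(1)] P, of "\<lambda>n i. c n * unitv n i"] c00_scale[OF c00_unitv] by simp
  have "F (\<lambda>k i. \<Sum>n\<in>insert m S. c n * unitv n i) = F (\<lambda>k i. (\<lambda>k i. c m * unitv m i) k i + (\<lambda>k i. \<Sum>n\<in>S. c n * unitv n i) k i)"
    using insert.hyps by simp
  also have "\<dots> = F (\<lambda>k i. c m * unitv m i) + F (\<lambda>k i. \<Sum>n\<in>S. c n * unitv n i)" by (rule lin_add[OF L su rest])
  also have "F (\<lambda>k i. c m * unitv m i) = c m * F (\<lambda>k. unitv m)" using lin_scale[OF L u] by simp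
  finally show ?case using insert by simp
qed

lemma dir2:
  assumes P: "\<mu> \<in> Pset" and isF: "is_Xfunctional \<mu> F" and dn: "dualnorm \<mu> F = 1" and al0: "\<alpha>0 > 0"
    and diam: "Xdiam \<mu> (slice \<mu> F \<alpha>0) < \<epsilon>"
  shows "\<exists>j::nat. \<exists>a0 t. cnd \<epsilon> (1/real (j+2)) a0 \<mu> t"
proof -
  have L: "lin \<mu> F" using isF by (simp add: is_Xfunctional_def lin_def)
  obtain C where C: "\<forall>s\<in>Xspace \<mu>. \<bar>F s\<bar> \<le> C * Xnorm \<mu> s" using isF by (auto simp: is_Xfunctional_def)
  define SB where "SB = {\<bar>F s\<bar> | s. s \<in> Xball \<mu>}"
  have SBne: "SB \<noteq> {}" using Xball_zero[OF P] by (auto simp: SB_def)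
  have SBbdd: "bdd_above SB"
  proof (rule bdd_aboveI[of _ "\<bar>C\<bar>"])
    fix v assume "v \<in> SB"
    then obtain s where v: "v = \<bar>F s\<bar>" and s: "s \<in> Xspace \<mu>" "Xnorm \<mu> s \<le> 1" by (auto simp: SB_def Xball_def)
    have n0: "0 \<le> Xnorm \<mu> s" by (rule Xn_nonneg[OF P s(1)])
    have "C * Xnorm \<mu> s \<le> \<bar>C\<bar> * Xnorm \<mu> s" using n0 by (intro mult_right_mono) auto
    also have "\<dots> \<le> \<bar>C\<bar> * 1" using s(2) by (intro mult_left_mono) auto
    finally have "C * Xnorm \<mu> s \<le> \<bar>C\<bar>" by simp
    moreover have "\<bar>F s\<bar> \<le> C * Xnorm \<mu> s" using C s(1) by blast
    ultimately show "v \<le> \<bar>C\<bar>" using v by linarith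
  qed
  have SupSB: "Sup SB = 1" using dn unfolding dualnorm_def SB_def .
  have SB1: "\<bar>F s\<bar> \<le> 1" if s: "s \<in> Xball \<mu>" for s
  proof -
    have "\<bar>F s\<bar> \<in> SB" using s by (auto simp: SB_def)
    then have "\<bar>F s\<bar> \<le> Sup SB" by (rule cSup_upper[OF _ SBbdd])
    then show ?thesis using SupSB by simp
  qed
  have B: "bnd \<mu> F"
    unfolding bnd_def
  proof
    fix s assume s: "s \<in> Xspace \<mu>"
    define r where "r = Xnorm \<mu> s"
    have r0: "r \<ge> 0" unfolding r_def by (rule Xn_nonneg[OF P s])
    show "\<bar>F s\<bar> \<le> Xnorm \<mu> s"
    proof (cases "r = 0")
      case True
      then show ?thesis using C s r_def by force
    next
      case False
      then have rp: "r > 0" using r0 by simp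
      define s' where "s' = (\<lambda>k i. (1/r) * s k i)"
      have s'X: "s' \<in> Xspace \<mu>" unfolding s'_def by (rule X_scale[OF P s])
      have "Xnorm \<mu> s' = \<bar>1/r\<bar> * r" unfolding s'_def r_def by (rule Xn_scale[OF P s])
      then have "Xnorm \<mu> s' = 1" using rp by simp
      then have "s' \<in> Xball \<mu>" using s'X by (simp add: Xball_def)
      then have "\<bar>F s'\<bar> \<le> 1" by (rule SB1)
      moreover have "F s' = (1/r) * F s" unfolding s'_def by (rule lin_scale[OF L s])
      ultimately have "\<bar>F s\<bar> / r \<le> 1" using rp by (simp add: abs_mult)
      then show ?thesis using rp by (simp add: r_def divide_le_eq)
    qed
  qed
  obtain n :: nat where n: "n > 0" "inverse (real n) < \<alpha>0" using ex_inverse_of_nat_less[OF al0] by blast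
  define j where "j = n"
  define \<alpha> where "\<alpha> = 1 / real (j + 2)"
  have al: "0 < \<alpha>" "\<alpha> \<le> 1/2" "\<alpha> \<le> \<alpha>0"
  proof -
    show "0 < \<alpha>" by (simp add: \<alpha>_def)
    show "\<alpha> \<le> 1/2" by (simp add: \<alpha>_def)
    have "1 / real (j+2) \<le> 1 / real n" using n(1) by (intro divide_left_mono) (auto simp: j_def)
    then show "\<alpha> \<le> \<alpha>0" using n(2) by (simp add: \<alpha>_def inverse_eq_divide)
  qed
  define h where "h = (\<lambda>n. F (\<lambda>k. unitv n))"
  define t where "t = (\<lambda>n. if \<mu> (E n) = 0 then 0 else h n / \<mu> (E n))"
  have hb: "\<bar>h n\<bar> \<le> \<mu> (E n)" for n
    using bndD[OF B X_cst[OF c00_unitv P]] Xn_cst[OF c00_unitv P] mb_unit[OF P] by (simp add: h_def)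
  have th: "t n * \<mu> (E n) = h n" for n
    using hb[of n] by (auto simp: t_def)
  have tb: "\<forall>n. t n \<in> {-1..1}"
  proof
    fix n
    show "t n \<in> {-1..1}"
    proof (cases "\<mu> (E n) = 0")
      case True then show ?thesis by (simp add: t_def)
    next
      case False
      then have mp: "\<mu> (E n) > 0" using Pset_nonneg[OF P, of "E n"] by simp
      have h1: "h n \<le> \<mu> (E n)" "- \<mu> (E n) \<le> h n" using hb[of n] by auto
      have "h n / \<mu> (E n) \<le> 1" using h1 mp by (simp add: divide_le_eq)
      moreover have "-1 \<le> h n / \<mu> (E n)" using h1 mp by (simp add: le_divide_eq)
      ultimately show ?thesis using False by (simp add: t_def)
    qed
  qed
  have Femb: "F (\<lambda>k. emb a) = gsum \<mu> t a" for a
  proof -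
    have "F (\<lambda>k. emb a) = F (\<lambda>k i. \<Sum>n\<in>{n. Rep_V a n \<noteq> 0}. real_of_rat (Rep_V a n) * unitv n i)"
      by (subst emb_as_sum) simp
    also have "\<dots> = (\<Sum>n\<in>{n. Rep_V a n \<noteq> 0}. real_of_rat (Rep_V a n) * h n)"
      unfolding h_def by (rule lin_sum[OF P L finite_supp])
    also have "\<dots> = gsum \<mu> t a" unfolding gsum_def using th by (simp add: mult.assoc)
    finally show ?thesis .
  qed
  have Z1: "\<forall>a. \<bar>gsum \<mu> t a\<bar> \<le> \<mu> a"
  proof
    fix a
    have "\<bar>F (\<lambda>k. emb a)\<bar> \<le> \<mu> a"
      using bndD[OF B X_cst[OF c00_emb P]] Xn_cst[OF c00_emb P] mb_emb[OF P] by simp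
    then show "\<bar>gsum \<mu> t a\<bar> \<le> \<mu> a" unfolding Femb .
  qed
  obtain s where s: "s \<in> Xball \<mu>" "\<bar>F s\<bar> > 1 - \<alpha>/4"
  proof -
    have "\<exists>s\<in>Xball \<mu>. \<bar>F s\<bar> > 1 - \<alpha>/4"
    proof (rule ccontr)
      assume "\<not> ?thesis"
      then have "\<And>v. v \<in> SB \<Longrightarrow> v \<le> 1 - \<alpha>/4" by (auto simp: SB_def not_less)
      then have "Sup SB \<le> 1 - \<alpha>/4" by (rule cSup_least[OF SBne])
      then show False using SupSB al by simp
    qed
    then show ?thesis using that by blast
  qed
  obtain s2 where s2: "s2 \<in> Xspace \<mu>" "Xnorm \<mu> s2 \<le> 1" "F s2 > 1 - \<alpha>/4"
  proof (cases "F s \<ge> 0")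
    case True
    then show ?thesis using that s by (auto simp: Xball_def)
  next
    case False
    have sX: "s \<in> Xspace \<mu>" "Xnorm \<mu> s \<le> 1" using s by (auto simp: Xball_def)
    define s2 where "s2 = (\<lambda>k i. (-1) * s k i)"
    have "s2 \<in> Xspace \<mu>" unfolding s2_def by (rule X_scale[OF P sX(1)])
    moreover have "Xnorm \<mu> s2 = Xnorm \<mu> s" unfolding s2_def using Xn_scale[OF P sX(1), of "-1"] by simp
    moreover have "F s2 = - F s" unfolding s2_def using lin_scale[OF L sX(1), of "-1"] by simp
    ultimately show ?thesis using that sX s False by auto
  qed
  obtain a0 where a0: "\<mu> a0 < 1" "F (\<lambda>k. emb a0) > 1 - \<alpha>/4"
    using approx_X[OF P L B s2(1) s2(2) s2(3), of 1] by auto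
  have Z3: "1 \<le> \<mu> a \<or> 1 \<le> \<mu> b \<or> gsum \<mu> t a \<le> 1 - \<alpha> \<or> gsum \<mu> t b \<le> 1 - \<alpha> \<or> \<mu> (vminus a b) \<le> \<epsilon>" for a b
  proof (rule ccontr)
    assume "\<not> ?thesis"
    then have ab: "\<mu> a < 1" "\<mu> b < 1" "gsum \<mu> t a > 1 - \<alpha>" "gsum \<mu> t b > 1 - \<alpha>" "\<mu> (vminus a b) > \<epsilon>" by auto
    have ca: "(\<lambda>k. emb a) \<in> slice \<mu> F \<alpha>0"
      using X_cst[OF c00_emb P, of a] Xn_cst[OF c00_emb P, of a] mb_emb[OF P, of a] ab(1,3) Femb[of a] al(3)
      by (simp add: slice_def Xball_def)
    have cb: "(\<lambda>k. emb b) \<in> slice \<mu> F \<alpha>0"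
      using X_cst[OF c00_emb P, of b] Xn_cst[OF c00_emb P, of b] mb_emb[OF P, of b] ab(2,4) Femb[of b] al(3)
      by (simp add: slice_def Xball_def)
    have bd: "bdd_above {Xdist \<mu> s u |s u. s \<in> slice \<mu> F \<alpha>0 \<and> u \<in> slice \<mu> F \<alpha>0}"
    proof (rule bdd_aboveI[of _ 2])
      fix v assume "v \<in> {Xdist \<mu> s u |s u. s \<in> slice \<mu> F \<alpha>0 \<and> u \<in> slice \<mu> F \<alpha>0}"
      then obtain s u where v: "v = Xdist \<mu> s u" and s: "s \<in> Xspace \<mu>" "Xnorm \<mu> s \<le> 1" and u: "u \<in> Xspace \<mu>" "Xnorm \<mu> u \<le> 1"
        by (auto simp: slice_def Xball_def)
      have "Xnorm \<mu> (\<lambda>k i. s k i + (\<lambda>k i. (-1) * u k i) k i) \<le> Xnorm \<mu> s + Xnorm \<mu> (\<lambda>k i. (-1) * u k i)"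
        by (rule Xn_add[OF P s(1) X_scale[OF P u(1)]])
      moreover have "Xnorm \<mu> (\<lambda>k i. (-1) * u k i) = Xnorm \<mu> u" using Xn_scale[OF P u(1), of "-1"] by simp
      ultimately show "v \<le> 2" using s u by (simp add: v Xdist_def)
    qed
    have "Xdist \<mu> (\<lambda>k. emb a) (\<lambda>k. emb b) \<le> Xdiam \<mu> (slice \<mu> F \<alpha>0)"
      unfolding Xdiam_def by (rule cSup_upper[OF _ bd]) (use ca cb in blast)
    moreover have "Xdist \<mu> (\<lambda>k. emb a) (\<lambda>k. emb b) = \<mu> (vminus a b)"
      using Xn_cst[OF c00_diff[OF c00_emb c00_emb] P, of a b] mb_emb[OF P, of "vminus a b"]
      by (simp add: Xdist_def emb_vminus)
    ultimately show False using diam ab(5) by linarith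
  qed
  have "cnd \<epsilon> \<alpha> a0 \<mu> t"
    unfolding cnd_def using tb Z1 a0 Femb[of a0] Z3 by auto
  then show ?thesis unfolding \<alpha>_def by blast
qed

lemma inj_V_list: "inj (\<lambda>a. map (Rep_V a) [0..<Suc (Max {n. Rep_V a n \<noteq> 0})])"
proof (rule injI)
  fix a b assume eq: "map (Rep_V a) [0..<Suc (Max {n. Rep_V a n \<noteq> 0})] = map (Rep_V b) [0..<Suc (Max {n. Rep_V b n \<noteq> 0})]"
  define Na where "Na = Max {n. Rep_V a n \<noteq> 0}"
  define Nb where "Nb = Max {n. Rep_V b n \<noteq> 0}"
  have "length (map (Rep_V a) [0..<Suc Na]) = length (map (Rep_V b) [0..<Suc Nb])"
    using eq unfolding Na_def Nb_def by simp
  then have NN: "Na = Nb" by simp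
  have za: "Rep_V a n = 0" if "n > Na" for n
    using Max_ge[OF finite_supp[of a], of n] that unfolding Na_def by force
  have zb: "Rep_V b n = 0" if "n > Nb" for n
    using Max_ge[OF finite_supp[of b], of n] that unfolding Nb_def by force
  have "Rep_V a n = Rep_V b n" for n
  proof (cases "n \<le> Na")
    case True
    have "map (Rep_V a) [0..<Suc Na] = map (Rep_V b) [0..<Suc Na]"
      using eq NN unfolding Na_def Nb_def by simp
    then show ?thesis using True unfolding map_eq_conv by (simp del: upt_Suc)
  next
    case False then show ?thesis using za zb NN by simp
  qed
  then show "a = b" using Rep_V_inject by blast
qed

instance V :: countable
  proof (rule countable_classI[of "\<lambda>a. to_nat (map (Rep_V a) [0..<Suc (Max {n. Rep_V a n \<noteq> 0})])"])
  fix x y :: V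
  assume "to_nat (map (Rep_V x) [0..<Suc (Max {n. Rep_V x n \<noteq> 0})]) = to_nat (map (Rep_V y) [0..<Suc (Max {n. Rep_V y n \<noteq> 0})])"
  then show "x = y" using injD[OF inj_V_list] by simp
qed

lemma char: "\<mu> \<in> Pset \<Longrightarrow> ball_dentable \<mu> \<longleftrightarrow>
   (\<forall>i::nat. \<exists>j::nat. \<exists>a0 t. cnd (1/(2*real (Suc i))) (1/real (j+2)) a0 \<mu> t)"
proof
  assume P: "\<mu> \<in> Pset" and D: "ball_dentable \<mu>"
  show "\<forall>i::nat. \<exists>j::nat. \<exists>a0 t. cnd (1/(2*real (Suc i))) (1/real (j+2)) a0 \<mu> t"
  proof
    fix i :: nat
    have "(1::real)/(2*real (Suc i)) > 0" by simp
    then obtain F \<alpha> where F: "is_Xfunctional \<mu> F" "dualnorm \<mu> F = 1" "\<alpha> > 0"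
      "Xdiam \<mu> (slice \<mu> F \<alpha>) < 1/(2*real (Suc i))"
      using D unfolding ball_dentable_def by blast
    show "\<exists>j::nat. \<exists>a0 t. cnd (1/(2*real (Suc i))) (1/real (j+2)) a0 \<mu> t"
      by (rule dir2[OF P F])
  qed
next
  assume P: "\<mu> \<in> Pset" and H: "\<forall>i::nat. \<exists>j::nat. \<exists>a0 t. cnd (1/(2*real (Suc i))) (1/real (j+2)) a0 \<mu> t"
  show "ball_dentable \<mu>"
    unfolding ball_dentable_def
  proof (intro allI impI)
    fix \<epsilon> :: real assume e: "\<epsilon> > 0"
    obtain i where i: "inverse (real (Suc i)) < \<epsilon>" using reals_Archimedean[OF e] by blast
    obtain j a0 t where c: "cnd (1/(2*real (Suc i))) (1/real (j+2)) a0 \<mu> t" using H by blast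
    have al: "0 < 1/real (j+2)" "1/real (j+2) \<le> (1::real)/2" by (auto simp: divide_simps)
    obtain F \<beta> where F: "is_Xfunctional \<mu> F" "dualnorm \<mu> F = 1" "\<beta> > 0"
      "Xdiam \<mu> (slice \<mu> F \<beta>) \<le> 1/(2*real (Suc i))"
      using dir1[OF P c al] by blast
    have "1/(2*real (Suc i)) < inverse (real (Suc i))" by (simp add: inverse_eq_divide divide_simps)
    then have "Xdiam \<mu> (slice \<mu> F \<beta>) < \<epsilon>" using F(4) i by linarith
    then show "\<exists>F \<alpha>. is_Xfunctional \<mu> F \<and> dualnorm \<mu> F = 1 \<and> \<alpha> > 0 \<and> Xdiam \<mu> (slice \<mu> F \<alpha>) < \<epsilon>"
      using F by blast
  qed
qed

theorem corollary5p4: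
  fixes I :: "(V \<Rightarrow> real) set"
  assumes "I = Pset \<or> I = Pinf \<or> I = Bset"
  shows "Fsigma_delta_in (top_of_set I) {\<mu> \<in> I. ball_dentable \<mu>}"
proof -
  have IP: "I \<subseteq> Pset" using assms unfolding Pinf_def Bset_def by auto
  define C where "C = (\<lambda>i k. {\<mu> \<in> I. \<exists>t. cnd (1/(2*real (Suc i))) (1/real (fst (from_nat k::nat\<times>V)+2)) (snd (from_nat k::nat\<times>V)) \<mu> t})"
  have "closedin (top_of_set I) (C i k)" for i k unfolding C_def by (rule closed_proj)
  moreover have "{\<mu> \<in> I. ball_dentable \<mu>} = (\<Inter>i. \<Union>k. C i k)"
  proof (intro equalityI subsetI)
    fix \<mu> assume "\<mu> \<in> {\<mu> \<in> I. ball_dentable \<mu>}"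
    then have m: "\<mu> \<in> I" and "\<forall>i::nat. \<exists>j::nat. \<exists>a0 t. cnd (1/(2*real (Suc i))) (1/real (j+2)) a0 \<mu> t"
      using char IP by auto
    then show "\<mu> \<in> (\<Inter>i. \<Union>k. C i k)"
      unfolding C_def by simp (metis from_nat_to_nat fst_conv snd_conv)
  next
    fix \<mu> assume "\<mu> \<in> (\<Inter>i. \<Union>k. C i k)"
    then have m: "\<mu> \<in> I" and h: "\<And>i. \<exists>k t. cnd (1/(2*real (Suc i))) (1/real (fst (from_nat k::nat\<times>V)+2)) (snd (from_nat k::nat\<times>V)) \<mu> t"
      unfolding C_def by auto
    have "\<forall>i::nat. \<exists>j::nat. \<exists>a0 t. cnd (1/(2*real (Suc i))) (1/real (j+2)) a0 \<mu> t"
    proof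
      fix i
      from h[of i] obtain k t where "cnd (1/(2*real (Suc i))) (1/real (fst (from_nat k::nat\<times>V)+2)) (snd (from_nat k::nat\<times>V)) \<mu> t" by blast
      then show "\<exists>j::nat. \<exists>a0 t. cnd (1/(2*real (Suc i))) (1/real (j+2)) a0 \<mu> t" by blast
    qed
    with m show "\<mu> \<in> {\<mu> \<in> I. ball_dentable \<mu>}" using char IP by auto
  qed
  ultimately show ?thesis unfolding Fsigma_delta_in_def by blast
qed

end
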